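(* Let $K\subseteq\Sigma^*$ be a bounded context-free language. Then there exists a bounded regular language $R\supseteq K$ such that $\{|w|:w\in K\}=\{|w|:w\in R\}$ and $\Psi(K)=\Psi(R)$.
   Context: A language is bounded if it is contained in $w_1^*\cdots w_k^*$ for some words $w_1,\dots,w_k$. For $a_1\cdots a_n\in\Sigma^*$, $\Psi(a_1\cdots a_n)=\{(a_1,n),(a_2,n-1),\dots,(a_n,1)\}$, and $\Psi(L)=\bigcup_{w\in L}\Psi(w)$. *)

theory Defs
  imports Main
begin

text \<open>A production rewrites a nonterminal (encoded as a natural number; any finite
  set of nonterminals can be renamed into nat) into a sentential form, i.e. a list
  of symbols, each either a nonterminal (Inl) or a terminal (Inr).\<close>

type_synonym 'a prod = "nat \<times> (nat + 'a) list"

inductive derives :: "'a prod set \<Rightarrow> (nat + 'a) list \<Rightarrow> (nat + 'a) list \<Rightarrow> bool"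
  for P where
  refl: "derives P u u"
| step: "derives P u (v @ Inl A # w) \<Longrightarrow> (A, \<alpha>) \<in> P \<Longrightarrow> derives P u (v @ \<alpha> @ w)"

definition cfg_lang :: "'a prod set \<Rightarrow> nat \<Rightarrow> 'a list set" where
  "cfg_lang P S = {w. derives P [Inl S] (map Inr w)}"

definition context_free :: "'a list set \<Rightarrow> bool" where
  "context_free L \<longleftrightarrow> (\<exists>P S. finite P \<and> L = cfg_lang P S)"

datatype 'a rexp = Zero | One | Atom 'a | Plus "'a rexp" "'a rexp"
  | Times "'a rexp" "'a rexp" | Star "'a rexp"

definition conc :: "'a list set \<Rightarrow> 'a list set \<Rightarrow> 'a list set" where
  "conc A B = {u @ v | u v. u \<in> A \<and> v \<in> B}"

inductive_set kleene_star :: "'a list set \<Rightarrow> 'a list set" for A where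
  nil: "[] \<in> kleene_star A"
| app: "u \<in> A \<Longrightarrow> v \<in> kleene_star A \<Longrightarrow> u @ v \<in> kleene_star A"

fun rlang :: "'a rexp \<Rightarrow> 'a list set" where
  "rlang Zero = {}"
| "rlang One = {[]}"
| "rlang (Atom a) = {[a]}"
| "rlang (Plus r s) = rlang r \<union> rlang s"
| "rlang (Times r s) = conc (rlang r) (rlang s)"
| "rlang (Star r) = kleene_star (rlang r)"

definition regular :: "'a list set \<Rightarrow> bool" where
  "regular L \<longleftrightarrow> (\<exists>r. L = rlang r)"

definition word_star :: "'a list \<Rightarrow> 'a list set" where
  "word_star w = {concat (replicate n w) | n. True}"

definition bounded_prod :: "'a list list \<Rightarrow> 'a list set" where
  "bounded_prod ws = foldr (\<lambda>w A. conc (word_star w) A) ws {[]}"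

definition bounded :: "'a list set \<Rightarrow> bool" where
  "bounded L \<longleftrightarrow> (\<exists>ws. L \<subseteq> bounded_prod ws)"

definition Psi :: "'a list \<Rightarrow> ('a \<times> nat) set" where
  "Psi w = {(w ! i, length w - i) | i. i < length w}"

definition Psi_lang :: "'a list set \<Rightarrow> ('a \<times> nat) set" where
  "Psi_lang L = (\<Union>w\<in>L. Psi w)"

end

theory Submission
  imports Defs
begin

datatype 'a tr = Lf 'a | Nd nat "'a tr list"

fun rt :: "'a tr \<Rightarrow> nat + 'a" where
  "rt (Lf a) = Inr a" | "rt (Nd A ts) = Inl A"

fun yield :: "'a tr \<Rightarrow> 'a list" where
  "yield (Lf a) = [a]" | "yield (Nd A ts) = concat (map yield ts)"

fun valid :: "'a prod set \<Rightarrow> 'a tr \<Rightarrow> bool" where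
  "valid P (Lf a) = True"
| "valid P (Nd A ts) = ((A, map rt ts) \<in> P \<and> (\<forall>t\<in>set ts. valid P t))"

definition step :: "'a prod set \<Rightarrow> (nat + 'a) list \<Rightarrow> (nat + 'a) list \<Rightarrow> bool" where
  "step P x y \<longleftrightarrow> (\<exists>v w A \<alpha>. x = v @ Inl A # w \<and> y = v @ \<alpha> @ w \<and> (A, \<alpha>) \<in> P)"

lemma derives_rtc: "derives P u v \<longleftrightarrow> (step P)\<^sup>*\<^sup>* u v"
proof
  assume "derives P u v" then show "(step P)\<^sup>*\<^sup>* u v"
  proof induction
    case (refl u) then show ?case by simp
  next
    case (step u v A w \<alpha>)
    have "step P (v @ Inl A # w) (v @ \<alpha> @ w)" unfolding step_def
      apply (rule exI[of _ v], rule exI[of _ w], rule exI[of _ A], rule exI[of _ \<alpha>])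
      using step by simp
    moreover have "(step P)\<^sup>*\<^sup>* u (v @ Inl A # w)" using step by simp
    ultimately show ?case using rtranclp.rtrancl_into_rtrancl by metis
  qed
next
  assume "(step P)\<^sup>*\<^sup>* u v" then show "derives P u v"
  proof induction
    case base then show ?case by (rule derives.refl)
  next
    case (step y z)
    from step(2) obtain v w A \<alpha> where "y = v @ Inl A # w" "z = v @ \<alpha> @ w" "(A, \<alpha>) \<in> P"
      unfolding step_def by (elim exE conjE)
    with step(3) show ?case using derives.step[of P u v A w \<alpha>] by simp
  qed
qed

lemma derives_trans: "derives P u v \<Longrightarrow> derives P v w \<Longrightarrow> derives P u w"
  unfolding derives_rtc by (rule rtranclp_trans)

lemma derives_ctx: "derives P u v \<Longrightarrow> derives P (x @ u @ y) (x @ v @ y)"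
proof (induction rule: derives.induct)
  case (refl u) then show ?case by (rule derives.refl)
next
  case (step u v A w \<alpha>)
  have "derives P (x @ u @ y) ((x @ v) @ Inl A # (w @ y))" using step by simp
  from derives.step[OF this step(2)] show ?case by simp
qed

lemma forest_derives:
  "(\<forall>t\<in>set ts. derives P [rt t] (map Inr (yield t))) \<Longrightarrow>
   derives P (map rt ts) (map Inr (concat (map yield ts)))"
proof (induction ts)
  case Nil then show ?case by (simp add: derives.refl)
next
  case (Cons t ts)
  have 1: "derives P ([rt t] @ map rt ts) (map Inr (yield t) @ map rt ts)"
    using Cons derives_ctx[of P "[rt t]" _ "[]" "map rt ts"] by auto
  have 2: "derives P (map Inr (yield t) @ map rt ts) (map Inr (yield t) @ map Inr (concat (map yield ts)))"
    using Cons derives_ctx[of P "map rt ts" _ "map Inr (yield t)" "[]"] by auto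
  show ?case using derives_trans[OF 1 2] by simp
qed

lemma tree_derives: "valid P t \<Longrightarrow> derives P [rt t] (map Inr (yield t))"
proof (induction t)
  case (Lf a) then show ?case by (simp add: derives.refl)
next
  case (Nd A ts)
  have "derives P [Inl A] ([] @ map rt ts @ [])"
    using Nd.prems derives.step[OF derives.refl[of P "[] @ Inl A # []"]] by auto
  moreover have "derives P (map rt ts) (map Inr (concat (map yield ts)))"
    using Nd by (intro forest_derives) auto
  ultimately have "derives P [Inl A] (map Inr (concat (map yield ts)))"
    using derives_trans[of P "[Inl A]" "map rt ts"] by simp
  then show ?case by simp
qed

lemma derives_forest:
  assumes "(step P)\<^sup>*\<^sup>* u v" "v = map Inr w"
  shows "\<exists>ts. map rt ts = u \<and> (\<forall>t\<in>set ts. valid P t) \<and> concat (map yield ts) = w"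
  using assms
proof (induction arbitrary: w rule: converse_rtranclp_induct)
  case base
  show ?case by (rule exI[of _ "map Lf w"]) (auto simp: base comp_def)
next
  case (step y z)
  have "\<exists>ts. map rt ts = z \<and> (\<forall>t\<in>set ts. valid P t) \<and> concat (map yield ts) = w"
    using step.IH step.prems by simp
  then obtain ts where ts: "map rt ts = z" "\<forall>t\<in>set ts. valid P t" "concat (map yield ts) = w"
    by (elim exE conjE)
  from step(1) obtain x A y' \<alpha> where y: "y = x @ Inl A # y'" "z = x @ \<alpha> @ y'" "(A, \<alpha>) \<in> P"
    unfolding step_def by (elim exE conjE)
  define t1 where "t1 = take (length x) ts"
  define t2 where "t2 = take (length \<alpha>) (drop (length x) ts)"
  define t3 where "t3 = drop (length \<alpha>) (drop (length x) ts)"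
  have ts_eq: "ts = t1 @ t2 @ t3" unfolding t1_def t2_def t3_def by (simp only: append_take_drop_id)
  have e: "map rt ts = x @ \<alpha> @ y'" using ts(1) y(2) by simp
  have "map rt t1 = take (length x) (map rt ts)" by (simp add: t1_def take_map)
  then have m1: "map rt t1 = x" using e by simp
  have "map rt t2 = take (length \<alpha>) (drop (length x) (map rt ts))" by (simp add: t2_def take_map drop_map)
  then have m2: "map rt t2 = \<alpha>" using e by simp
  have "map rt t3 = drop (length \<alpha>) (drop (length x) (map rt ts))" by (simp add: t3_def drop_map)
  then have m3: "map rt t3 = y'" using e by simp
  show ?case
  proof (intro exI conjI)
    show "map rt (t1 @ [Nd A t2] @ t3) = y" using m1 m3 by (simp add: y(1))
    have v: "\<forall>t\<in>set t1 \<union> set t2 \<union> set t3. valid P t" proof -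
      have "set ts = set t1 \<union> set t2 \<union> set t3" by (subst ts_eq) auto
      then show ?thesis using ts(2) by simp
    qed
    then show "\<forall>t\<in>set (t1 @ [Nd A t2] @ t3). valid P t" using m2 y(3) by auto
    have "concat (map yield ts) = concat (map yield t1) @ concat (map yield t2) @ concat (map yield t3)"
      by (subst ts_eq) simp
    then show "concat (map yield (t1 @ [Nd A t2] @ t3)) = w" using ts(3) by simp
  qed
qed

definition tlang :: "'a prod set \<Rightarrow> nat \<Rightarrow> 'a list set" where
  "tlang P S = {yield t |t. valid P t \<and> rt t = Inl S}"

lemma tlangI: "valid P t \<Longrightarrow> rt t = Inl S \<Longrightarrow> yield t \<in> tlang P S"
  unfolding tlang_def by blast

lemma tlangE: "w \<in> tlang P S \<Longrightarrow> \<exists>t. valid P t \<and> rt t = Inl S \<and> yield t = w"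
  unfolding tlang_def by blast

lemma single_forest: "map rt ts = [Inl S] \<Longrightarrow> \<exists>t. ts = [t] \<and> rt t = Inl S"
  by (cases ts) auto

lemma cfg_tlang: "cfg_lang P S = tlang P S"
proof
  show "cfg_lang P S \<subseteq> tlang P S"
  proof
    fix w assume "w \<in> cfg_lang P S"
    then have "(step P)\<^sup>*\<^sup>* [Inl S] (map Inr w)" by (simp add: cfg_lang_def derives_rtc)
    from derives_forest[OF this HOL.refl] obtain ts where
      ts: "map rt ts = [Inl S]" "\<forall>t\<in>set ts. valid P t" "concat (map yield ts) = w"
      by (elim exE conjE)
    from single_forest[OF ts(1)] obtain t where t: "ts = [t]" "rt t = Inl S" by (elim exE conjE)
    have "valid P t" using ts(2) t(1) by simp
    moreover have "yield t = w" using ts(3) t(1) by simp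
    ultimately show "w \<in> tlang P S" using tlangI t(2) by metis
  qed
next
  show "tlang P S \<subseteq> cfg_lang P S"
  proof
    fix w assume "w \<in> tlang P S"
    from tlangE[OF this] obtain t where t: "valid P t" "rt t = Inl S" "yield t = w" by (elim exE conjE)
    then show "w \<in> cfg_lang P S" using tree_derives[of P t] by (simp add: cfg_lang_def)
  qed
qed


datatype 'a ctx = Hole | CN nat "'a tr list" "'a ctx" "'a tr list"

fun plug :: "'a ctx \<Rightarrow> 'a tr \<Rightarrow> 'a tr" where
  "plug Hole t = t" | "plug (CN A l c r) t = Nd A (l @ plug c t # r)"

fun ccomp :: "'a ctx \<Rightarrow> 'a ctx \<Rightarrow> 'a ctx" where
  "ccomp Hole d = d" | "ccomp (CN A l c r) d = CN A l (ccomp c d) r"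

fun cpow :: "'a ctx \<Rightarrow> nat \<Rightarrow> 'a ctx" where
  "cpow c 0 = Hole" | "cpow c (Suc k) = ccomp c (cpow c k)"

fun clen :: "'a ctx \<Rightarrow> nat" where
  "clen Hole = 0"
| "clen (CN A l c r) = length (concat (map yield l)) + clen c + length (concat (map yield r))"

fun tsz :: "'a tr \<Rightarrow> nat" where
  "tsz (Lf a) = 1" | "tsz (Nd A ts) = 1 + sum_list (map tsz ts)"

fun csz :: "'a ctx \<Rightarrow> nat" where
  "csz Hole = 0"
| "csz (CN A l c r) = 1 + sum_list (map tsz l) + csz c + sum_list (map tsz r)"

fun height :: "'a tr \<Rightarrow> nat" where
  "height (Lf a) = 0" | "height (Nd A ts) = Suc (Max (insert 0 (set (map height ts))))"

lemma plug_comp: "plug (ccomp c d) x = plug c (plug d x)"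
  by (induction c) auto

lemma clen_comp: "clen (ccomp c d) = clen c + clen d"
  by (induction c) auto

lemma clen_cpow: "clen (cpow c k) = k * clen c"
  by (induction k) (auto simp: clen_comp)

lemma len_plug: "length (yield (plug c x)) = clen c + length (yield x)"
  by (induction c) auto

lemma tsz_plug: "tsz (plug c x) = csz c + tsz x"
  by (induction c) auto

lemma csz_pos: "c \<noteq> Hole \<Longrightarrow> csz c \<ge> 1"
  by (cases c) auto

lemma rt_plug: "rt x = rt y \<Longrightarrow> rt (plug c x) = rt (plug c y)"
  by (cases c) auto

lemma valid_plug_sub: "valid P (plug c x) \<Longrightarrow> valid P x"
  by (induction c) auto

lemma valid_plug_swap: "valid P (plug c x) \<Longrightarrow> valid P y \<Longrightarrow> rt y = rt x \<Longrightarrow> valid P (plug c y)"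
proof (induction c)
  case Hole then show ?case by simp
next
  case (CN A l c r)
  have "rt (plug c y) = rt (plug c x)" using CN.prems(3) by (rule rt_plug)
  then show ?case using CN by auto
qed

lemma height_child: "t \<in> set ts \<Longrightarrow> height t < height (Nd A ts)"
  by (auto simp: le_imp_less_Suc)

lemma height_child_ex: "height (Nd A ts) \<ge> 2 \<Longrightarrow> \<exists>t\<in>set ts. Suc (height t) = height (Nd A ts)"
proof -
  assume h: "height (Nd A ts) \<ge> 2"
  let ?M = "Max (insert 0 (set (map height ts)))"
  have "?M \<in> insert 0 (set (map height ts))" by (rule Max_in) auto
  moreover have "?M \<noteq> 0" using h by auto
  ultimately show ?thesis by auto
qed

lemma height_plug: "height x \<le> height (plug c x)"
proof (induction c)
  case Hole then show ?case by simp
next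
  case (CN A l c r)
  then show ?case using height_child[of "plug c x" "l @ plug c x # r" A] by simp
qed

lemma sum_list_bound: "(\<forall>x\<in>set xs. f x \<le> (B::nat)) \<Longrightarrow> sum_list (map f xs) \<le> length xs * B"
  by (induction xs) auto

lemma yield_bound:
  assumes "\<forall>(A,\<alpha>)\<in>P. length \<alpha> \<le> m" "1 \<le> m"
  shows "valid P t \<Longrightarrow> length (yield t) \<le> m ^ height t"
proof (induction t)
  case (Lf a) then show ?case by simp
next
  case (Nd A ts)
  let ?h = "Max (insert 0 (set (map height ts)))"
  have "\<forall>t\<in>set ts. length (yield t) \<le> m ^ ?h"
  proof
    fix t assume t: "t \<in> set ts"
    then have "length (yield t) \<le> m ^ height t" using Nd by auto
    also have "\<dots> \<le> m ^ ?h" using t assms(2) by (intro power_increasing) auto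
    finally show "length (yield t) \<le> m ^ ?h" .
  qed
  then have "sum_list (map (length \<circ> yield) ts) \<le> length ts * m ^ ?h"
    by (intro sum_list_bound) auto
  moreover have "length ts \<le> m" using Nd.prems assms(1) by fastforce
  ultimately have "sum_list (map (length \<circ> yield) ts) \<le> m * m ^ ?h"
    by (meson le_trans mult_le_mono1)
  then show ?case by (simp add: length_concat)
qed

lemma descend: "1 \<le> h \<Longrightarrow> h \<le> height t \<Longrightarrow> \<exists>c t0. t = plug c t0 \<and> height t0 = h"
proof (induction t)
  case (Lf a) then show ?case by simp
next
  case (Nd A ts)
  show ?case
  proof (cases "height (Nd A ts) = h")
    case True then show ?thesis by (intro exI[of _ Hole]) auto
  next
    case False
    with Nd.prems have "height (Nd A ts) \<ge> 2" by linarith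
    then obtain t where t: "t \<in> set ts" "Suc (height t) = height (Nd A ts)"
      using height_child_ex by blast
    then have "h \<le> height t" using Nd.prems False by linarith
    then obtain c t0 where "t = plug c t0" "height t0 = h" using Nd.IH t(1) Nd.prems(1) by blast
    moreover obtain l r where "ts = l @ t # r" using t(1) by (meson split_list)
    ultimately show ?thesis by (intro exI[of _ "CN A l c r"] exI[of _ t0]) auto
  qed
qed


lemma valid_label: "valid P (Nd A ts) \<Longrightarrow> A \<in> fst ` P"
  by force

lemma rep:
  assumes "finite V" "fst ` P \<subseteq> V"
  shows "valid P t \<Longrightarrow> W \<subseteq> V \<Longrightarrow> Suc (card (V - W)) \<le> height t \<Longrightarrow>
    (\<exists>c1 c2 s. t = plug c1 (plug c2 s) \<and> c2 \<noteq> Hole \<and> rt (plug c2 s) = rt s) \<or>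
    (\<exists>c1 s B. t = plug c1 s \<and> rt s = Inl B \<and> B \<in> W)"
proof (induction t arbitrary: W)
  case (Lf a) then show ?case by simp
next
  case (Nd A ts)
  show ?case
  proof (cases "A \<in> W")
    case True
    then show ?thesis by (intro disjI2 exI[of _ Hole] exI[of _ "Nd A ts"] exI[of _ A]) simp
  next
    case False
    have AV: "A \<in> V" using valid_label[OF Nd.prems(1)] assms(2) by blast
    have eq: "V - W = insert A (V - insert A W)" using AV False by blast
    have cardeq: "card (V - W) = Suc (card (V - insert A W))"
      using assms(1) by (subst eq) (auto simp: card_insert_if)
    have "height (Nd A ts) \<ge> 2" using Nd.prems(3) cardeq by linarith
    then obtain t where t: "t \<in> set ts" "Suc (height t) = height (Nd A ts)"
      using height_child_ex by blast
    have vt: "valid P t" using Nd.prems(1) t(1) by simp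
    have ht: "Suc (card (V - insert A W)) \<le> height t" using Nd.prems(3) cardeq t(2) by linarith
    have WV: "insert A W \<subseteq> V" using AV Nd.prems(2) by blast
    obtain l r where lr: "ts = l @ t # r" using t(1) by (meson split_list)
    from Nd.IH[OF t(1) vt WV ht] show ?thesis
    proof
      assume "\<exists>c1 c2 s. t = plug c1 (plug c2 s) \<and> c2 \<noteq> Hole \<and> rt (plug c2 s) = rt s"
      then obtain c1 c2 s where "t = plug c1 (plug c2 s)" "c2 \<noteq> Hole" "rt (plug c2 s) = rt s"
        by (elim exE conjE)
      then show ?thesis using lr
        by (intro disjI1 exI[of _ "CN A l c1 r"] exI[of _ c2] exI[of _ s]) simp
    next
      assume "\<exists>c1 s B. t = plug c1 s \<and> rt s = Inl B \<and> B \<in> insert A W"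
      then obtain c1 s B where cs: "t = plug c1 s" "rt s = Inl B" "B \<in> insert A W"
        by (elim exE conjE)
      show ?thesis
      proof (cases "B = A")
        case True
        then show ?thesis using cs lr
          by (intro disjI1 exI[of _ Hole] exI[of _ "CN A l c1 r"] exI[of _ s]) simp
      next
        case False
        then show ?thesis using cs lr
          by (intro disjI2 exI[of _ "CN A l c1 r"] exI[of _ s] exI[of _ B]) simp
      qed
    qed
  qed
qed

lemma cpow_valid:
  assumes "valid P (plug c2 s)" "valid P s" "rt (plug c2 s) = rt s"
  shows "valid P (plug (cpow c2 k) (plug c2 s)) \<and> rt (plug (cpow c2 k) (plug c2 s)) = rt s"
proof (induction k)
  case 0 then show ?case using assms by simp
next
  case (Suc k)
  let ?v = "plug (cpow c2 k) (plug c2 s)"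
  have "plug (cpow c2 (Suc k)) (plug c2 s) = plug c2 ?v" by (simp add: plug_comp)
  moreover have "valid P (plug c2 ?v)" using valid_plug_swap[OF assms(1)] Suc by simp
  moreover have "rt (plug c2 ?v) = rt s" using rt_plug[of ?v s c2] Suc assms(3) by simp
  ultimately show ?case by simp
qed

lemma pump:
  assumes m: "1 \<le> m" "\<forall>(A,\<alpha>)\<in>P. length \<alpha> \<le> m" and V: "finite V" "fst ` P \<subseteq> V"
    and n: "n \<in> length ` tlang P S" "m ^ card V < n"
  shows "\<exists>d. 1 \<le> d \<and> d \<le> m ^ Suc (card V) \<and> (\<forall>k. n + k * d \<in> length ` tlang P S)"
proof -
  let ?Q = "\<lambda>t. valid P t \<and> rt t = Inl S \<and> length (yield t) = n"
  from n(1) obtain w where w: "n = length w" "w \<in> tlang P S" by (rule imageE)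
  from tlangE[OF w(2)] obtain t0 where "valid P t0" "rt t0 = Inl S" "yield t0 = w"
    by (elim exE conjE)
  then have "?Q t0" using w(1) by simp
  from ex_has_least_nat[of ?Q t0 tsz, OF this] obtain t where
    tt: "?Q t \<and> (\<forall>y. ?Q y \<longrightarrow> tsz t \<le> tsz y)" by (elim exE)
  then have t: "?Q t" by simp
  have tmin: "tsz t \<le> tsz t'" if "?Q t'" for t' using tt that by simp
  have "n \<le> m ^ height t" using yield_bound[OF m(2) m(1), of t] t by simp
  have hV: "Suc (card V) \<le> height t"
  proof (rule ccontr)
    assume "\<not> Suc (card V) \<le> height t"
    then have "m ^ height t \<le> m ^ card V" using m(1) by (intro power_increasing) auto
    with \<open>n \<le> m ^ height t\<close> n(2) show False by linarith
  qed
  have "\<exists>c t1. t = plug c t1 \<and> height t1 = Suc (card V)" using descend[of "Suc (card V)" t] hV by simp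
  then obtain c t1 where ct: "t = plug c t1" "height t1 = Suc (card V)" by (elim exE conjE)
  have vt1: "valid P t1" using t ct(1) valid_plug_sub[of P c t1] by simp
  have "(\<exists>c1 c2 s. t1 = plug c1 (plug c2 s) \<and> c2 \<noteq> Hole \<and> rt (plug c2 s) = rt s) \<or>
    (\<exists>c1 s B. t1 = plug c1 s \<and> rt s = Inl B \<and> B \<in> {})"
    using rep[OF V vt1, of "{}"] ct(2) by simp
  then have "\<exists>c1 c2 s. t1 = plug c1 (plug c2 s) \<and> c2 \<noteq> Hole \<and> rt (plug c2 s) = rt s" by simp
  then obtain c1 c2 s where
    cs: "t1 = plug c1 (plug c2 s)" "c2 \<noteq> Hole" "rt (plug c2 s) = rt s" by (elim exE conjE)
  define C where "C = ccomp c c1"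
  define u where "u = plug c2 s"
  have tC: "t = plug C u" using ct(1) cs(1) by (simp add: C_def u_def plug_comp)
  have vu: "valid P u" using t tC valid_plug_sub[of P C u] by simp
  have vs: "valid P s" using vu u_def valid_plug_sub[of P c2 s] by simp
  have lenu: "length (yield u) = clen c2 + length (yield s)" by (simp add: u_def len_plug)
  have lent: "n = clen C + length (yield u)" using t tC len_plug[of C u] by simp
  define d where "d = clen c2"
  have "height u \<le> height t1" using cs(1) height_plug[of u c1] u_def by simp
  then have "length (yield u) \<le> m ^ Suc (card V)"
    using yield_bound[OF m(2) m(1) vu] ct(2) m(1) power_increasing[of "height u" "Suc (card V)" m]
    by linarith
  then have dle: "d \<le> m ^ Suc (card V)" using lenu d_def by linarith
  have dge: "1 \<le> d"
  proof (rule ccontr)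
    assume "\<not> 1 \<le> d"
    then have d0: "clen c2 = 0" using d_def by simp
    have "valid P (plug C s)" using valid_plug_swap[of P C u s] t tC vs cs(3) u_def by simp
    moreover have "rt (plug C s) = Inl S" using rt_plug[of s u C] cs(3) u_def t tC by simp
    moreover have "length (yield (plug C s)) = n" using lent lenu d0 len_plug[of C s] by simp
    ultimately have "tsz t \<le> tsz (plug C s)" using tmin by simp
    moreover have "tsz t = csz C + csz c2 + tsz s" using tC u_def by (simp add: tsz_plug)
    moreover have "csz c2 \<ge> 1" using csz_pos cs(2) by simp
    ultimately show False using tsz_plug[of C s] by linarith
  qed
  have "\<forall>k. n + k * d \<in> length ` tlang P S"
  proof
    fix k
    let ?tk = "plug C (plug (cpow c2 k) u)"
    have vk: "valid P (plug (cpow c2 k) u) \<and> rt (plug (cpow c2 k) u) = rt s"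
      using cpow_valid[of P c2 s k] vu vs cs(3) u_def by simp
    have "valid P ?tk" using valid_plug_swap[of P C u] t tC vk cs(3) u_def by simp
    moreover have "rt ?tk = Inl S" using rt_plug[of "plug (cpow c2 k) u" u C] vk cs(3) u_def t tC by simp
    moreover have "length (yield ?tk) = n + k * d"
      using lent by (simp add: len_plug clen_cpow d_def)
    ultimately have "yield ?tk \<in> tlang P S" "length (yield ?tk) = n + k * d" using tlangI by auto
    then show "n + k * d \<in> length ` tlang P S" by (metis image_eqI)
  qed
  then show ?thesis using dle dge by blast
qed

definition uptp :: "nat \<Rightarrow> nat \<Rightarrow> nat set \<Rightarrow> bool" where
  "uptp t p X \<longleftrightarrow> (\<forall>x y. x \<in> X \<longrightarrow> t \<le> x \<longrightarrow> t \<le> y \<longrightarrow> x mod p = y mod p \<longrightarrow> y \<in> X)"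

definition uper :: "nat set \<Rightarrow> bool" where
  "uper X \<longleftrightarrow> (\<exists>t p. 0 < p \<and> uptp t p X)"

lemma pump_uper:
  assumes H: "\<forall>n\<in>X. N0 < n \<longrightarrow> (\<exists>d. 1 \<le> d \<and> d \<le> D \<and> (\<forall>k. n + k * d \<in> X))"
  shows "uper X"
proof -
  define p :: nat where "p = fact D"
  have p0: "0 < p" by (simp add: p_def)
  have up: "n + k * p \<in> X" if "n \<in> X" "N0 < n" for n k
  proof -
    have "\<exists>d. 1 \<le> d \<and> d \<le> D \<and> (\<forall>k. n + k * d \<in> X)" using H that by simp
    then obtain d where d: "1 \<le> d" "d \<le> D" "\<forall>k. n + k * d \<in> X" by (elim exE conjE)
    have "d dvd p" unfolding p_def using d by (simp add: dvd_fact)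
    then obtain q where "p = d * q" by (elim dvdE)
    then have "n + k * p = n + (k * q) * d" by simp
    then show ?thesis using d(3) by metis
  qed
  define G where "G = {r. r < p \<and> (\<exists>n\<in>X. N0 < n \<and> n mod p = r)}"
  define wit where "wit r = (SOME n. n \<in> X \<and> N0 < n \<and> n mod p = r)" for r
  have wit: "wit r \<in> X \<and> N0 < wit r \<and> wit r mod p = r" if "r \<in> G" for r
  proof -
    from that obtain n where "n \<in> X \<and> N0 < n \<and> n mod p = r" unfolding G_def by blast
    then show ?thesis unfolding wit_def by (rule someI)
  qed
  define t where "t = Max (insert (Suc N0) (wit ` G))"
  have fin: "finite (insert (Suc N0) (wit ` G))" unfolding G_def by simp
  have tN: "Suc N0 \<le> t" unfolding t_def using fin by simp
  have tw: "wit r \<le> t" if "r \<in> G" for r unfolding t_def using fin that by simp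
  have "uptp t p X" unfolding uptp_def
  proof (intro allI impI)
    fix x y assume xy: "x \<in> X" "t \<le> x" "t \<le> y" "x mod p = y mod p"
    define r where "r = x mod p"
    have x1: "N0 < x" using xy(2) tN by simp
    have x2: "x mod p < p" using p0 by simp
    have rG: "r \<in> G" unfolding G_def r_def using xy(1) x1 x2 by blast
    from wit[OF rG] have w: "wit r \<in> X" "N0 < wit r" "wit r mod p = r" by auto
    have le: "wit r \<le> y" using tw[OF rG] xy(3) by linarith
    have "y mod p = wit r mod p" using w(3) xy(4) r_def by simp
    then have "p dvd y - wit r" using mod_eq_dvd_iff_nat[OF le] by simp
    then obtain k where "y - wit r = p * k" by (elim dvdE)
    then have "y = wit r + k * p" using le by (simp add: mult.commute)
    then show "y \<in> X" using up[OF w(1) w(2)] by simp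
  qed
  then show ?thesis unfolding uper_def using p0 by blast
qed

lemma tlang_uper:
  assumes "finite P"
  shows "uper (length ` tlang P S)"
proof -
  define m where "m = Suc (Max (insert 0 ((\<lambda>(A,\<alpha>). length \<alpha>) ` P)))"
  have m1: "1 \<le> m" by (simp add: m_def)
  have m2: "\<forall>(A,\<alpha>)\<in>P. length \<alpha> \<le> m"
  proof (intro ballI, clarify)
    fix A \<alpha> assume "(A, \<alpha>) \<in> P"
    then have "length \<alpha> \<in> insert 0 ((\<lambda>(A,\<alpha>). length \<alpha>) ` P)" by force
    then have "length \<alpha> \<le> Max (insert 0 ((\<lambda>(A,\<alpha>). length \<alpha>) ` P))"
      using assms by (intro Max_ge) auto
    then show "length \<alpha> \<le> m" unfolding m_def by simp
  qed
  have V: "finite (fst ` P)" "fst ` P \<subseteq> fst ` P" using assms by auto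
  show ?thesis
    by (rule pump_uper[of _ "m ^ card (fst ` P)" "m ^ Suc (card (fst ` P))"])
       (use pump[OF m1 m2 V] in blast)
qed


lemma concat_split:
  "concat xs = u @ a # v \<Longrightarrow> \<exists>i u2 v2. i < length xs \<and> xs ! i = u2 @ a # v2 \<and>
      v = v2 @ concat (drop (Suc i) xs) \<and> u = concat (take i xs) @ u2"
proof (induction xs arbitrary: u)
  case Nil then show ?case by simp
next
  case (Cons x xs)
  then have e: "x @ concat xs = u @ a # v" by simp
  then obtain us where us: "(x = u @ us \<and> us @ concat xs = a # v) \<or> (x @ us = u \<and> concat xs = us @ a # v)"
    using append_eq_append_conv2[of x "concat xs" u "a # v"] by blast
  then show ?case
  proof
    assume h: "x = u @ us \<and> us @ concat xs = a # v"
    show ?thesis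
    proof (cases us)
      case Nil
      then have "concat xs = [] @ a # v" "x = u" using h by auto
      from Cons.IH[OF this(1)] this(2) obtain i u2 v2 where
        "i < length xs" "xs ! i = u2 @ a # v2" "v = v2 @ concat (drop (Suc i) xs)" "[] = concat (take i xs) @ u2"
        by blast
      then show ?thesis using \<open>x = u\<close>
        by (intro exI[of _ "Suc i"] exI[of _ u2] exI[of _ v2]) simp
    next
      case (Cons b us')
      then have "x = u @ a # us'" "v = us' @ concat xs" using h by auto
      then show ?thesis by (intro exI[of _ 0] exI[of _ u] exI[of _ us']) simp
    qed
  next
    assume h: "x @ us = u \<and> concat xs = us @ a # v"
    from Cons.IH[of us] h obtain i u2 v2 where
      "i < length xs" "xs ! i = u2 @ a # v2" "v = v2 @ concat (drop (Suc i) xs)" "us = concat (take i xs) @ u2"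
      by blast
    then show ?thesis using h
      by (intro exI[of _ "Suc i"] exI[of _ u2] exI[of _ v2]) simp
  qed
qed

definition fsym :: "nat + 'a \<Rightarrow> nat + 'a" where
  "fsym X = (case X of Inl B \<Rightarrow> Inl (2 * B) | Inr x \<Rightarrow> Inr x)"

lemma fsym_simps[simp]: "fsym (Inl B) = Inl (2 * B)" "fsym (Inr x) = Inr x"
  by (simp_all add: fsym_def)

lemma fsym_inj: "fsym X = fsym Y \<Longrightarrow> X = Y"
  by (cases X; cases Y) auto

lemma map_fsym_inj: "map fsym xs = map fsym ys \<Longrightarrow> xs = ys"
  using fsym_inj by (metis inj_on_def list.inj_map_strong)

lemma odd_neq_even[simp]: "(2 * x = Suc (2 * (y::nat))) = False" "(Suc (2 * y) = 2 * x) = False"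
  by presburger+

definition prodv :: "'a prod set \<Rightarrow> nat + 'a \<Rightarrow> bool" where
  "prodv P X \<longleftrightarrow> (\<exists>t. valid P t \<and> rt t = X)"

definition Pm :: "'a prod set \<Rightarrow> 'a \<Rightarrow> 'a prod set" where
  "Pm P a =
     {(2 * A, map fsym \<alpha>) | A \<alpha>. (A, \<alpha>) \<in> P} \<union>
     {(2 * A + 1, Inl (2 * B + 1) # map fsym (drop (Suc i) \<alpha>)) | A \<alpha> i B.
        (A, \<alpha>) \<in> P \<and> i < length \<alpha> \<and> \<alpha> ! i = Inl B \<and> (\<forall>j<i. prodv P (\<alpha> ! j))} \<union>
     {(2 * A + 1, map fsym (drop (Suc i) \<alpha>)) | A \<alpha> i.
        (A, \<alpha>) \<in> P \<and> i < length \<alpha> \<and> \<alpha> ! i = Inr a \<and> (\<forall>j<i. prodv P (\<alpha> ! j))}"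

lemma finite_Pm:
  assumes "finite P" shows "finite (Pm P a)"
proof -
  let ?I = "SIGMA p:P. {..<length (snd p)}"
  have fI: "finite ?I" using assms by (intro finite_SigmaI) auto
  let ?g2 = "\<lambda>(p, i). (2 * fst p + 1, Inl (2 * (case snd p ! i of Inl B \<Rightarrow> B | Inr _ \<Rightarrow> 0) + 1)
                       # map fsym (drop (Suc i) (snd p)))"
  let ?g3 = "\<lambda>(p, i). (2 * fst p + 1, map fsym (drop (Suc i) (snd p)))"
  have "Pm P a \<subseteq> (\<lambda>(A, \<alpha>). (2 * A, map fsym \<alpha>)) ` P \<union> ?g2 ` ?I \<union> ?g3 ` ?I"
  proof
    fix x assume "x \<in> Pm P a"
    then consider (1) A \<alpha> where "x = (2 * A, map fsym \<alpha>)" "(A, \<alpha>) \<in> P"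
      | (2) A \<alpha> i B where "x = (2 * A + 1, Inl (2 * B + 1) # map fsym (drop (Suc i) \<alpha>))"
          "(A, \<alpha>) \<in> P" "i < length \<alpha>" "\<alpha> ! i = Inl B"
      | (3) A \<alpha> i where "x = (2 * A + 1, map fsym (drop (Suc i) \<alpha>))" "(A, \<alpha>) \<in> P" "i < length \<alpha>"
      unfolding Pm_def by blast
    then show "x \<in> (\<lambda>(A, \<alpha>). (2 * A, map fsym \<alpha>)) ` P \<union> ?g2 ` ?I \<union> ?g3 ` ?I"
    proof cases
      case 1 then show ?thesis by force
    next
      case 2
      then have "x = ?g2 ((A, \<alpha>), i)" "((A, \<alpha>), i) \<in> ?I" by auto
      then show ?thesis by blast
    next
      case 3
      then have "x = ?g3 ((A, \<alpha>), i)" "((A, \<alpha>), i) \<in> ?I" by auto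
      then show ?thesis by blast
    qed
  qed
  moreover have "finite ((\<lambda>(A, \<alpha>). (2 * A, map fsym \<alpha>)) ` P \<union> ?g2 ` ?I \<union> ?g3 ` ?I)"
    using assms fI by simp
  ultimately show ?thesis by (rule finite_subset)
qed

fun relabel :: "'a tr \<Rightarrow> 'a tr" where
  "relabel (Lf x) = Lf x" | "relabel (Nd A ts) = Nd (2 * A) (map relabel ts)"

lemma relabel_rt: "rt (relabel t) = fsym (rt t)"
  by (cases t) auto

lemma relabel_yield: "yield (relabel t) = yield t"
proof (induction t)
  case (Lf x) then show ?case by simp
next
  case (Nd A ts)
  show ?case using Nd.IH by (simp add: comp_def cong: map_cong)
qed

lemma relabel_valid: "valid P t \<Longrightarrow> valid (Pm P a) (relabel t)"
proof (induction t)
  case (Lf x) then show ?case by simp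
next
  case (Nd A ts)
  have "(A, map rt ts) \<in> P" using Nd.prems by simp
  then have mem: "(2 * A, map fsym (map rt ts)) \<in> Pm P a" unfolding Pm_def by blast
  have e: "map rt (map relabel ts) = map fsym (map rt ts)" by (simp add: relabel_rt comp_def)
  have "(2 * A, map rt (map relabel ts)) \<in> Pm P a" by (subst e) (rule mem)
  moreover have "\<forall>t\<in>set (map relabel ts). valid (Pm P a) t" using Nd by auto
  ultimately show ?case by (simp only: relabel.simps valid.simps)
qed

lemma list_choice: "\<forall>x\<in>set xs. \<exists>y. R x y \<Longrightarrow> \<exists>ys. list_all2 R xs ys"
proof (induction xs)
  case Nil then show ?case by simp
next
  case (Cons x xs)
  then obtain y ys where "R x y" "list_all2 R xs ys" by auto
  then show ?case by (intro exI[of _ "y # ys"]) simp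
qed

lemma list_all2_map_eq: "list_all2 (\<lambda>x y. f x = g y) xs ys \<Longrightarrow> map f xs = map g ys"
  by (induction rule: list_all2_induct) auto

lemma unrelabel:
  "valid (Pm P a) t \<Longrightarrow> (\<forall>n. rt t = Inl n \<longrightarrow> even n) \<Longrightarrow>
   \<exists>t0. valid P t0 \<and> fsym (rt t0) = rt t \<and> yield t0 = yield t"
proof (induction t)
  case (Lf x) then show ?case by (intro exI[of _ "Lf x"]) simp
next
  case (Nd n ts)
  from Nd.prems(2) obtain A where nA: "n = 2 * A" by (auto elim: evenE)
  from Nd.prems(1) have "(n, map rt ts) \<in> Pm P a" by simp
  then obtain \<alpha> where \<alpha>: "(A, \<alpha>) \<in> P" "map rt ts = map fsym \<alpha>"
    unfolding Pm_def nA by auto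
  have "\<forall>t\<in>set ts. \<exists>t0. valid P t0 \<and> fsym (rt t0) = rt t \<and> yield t0 = yield t"
  proof
    fix t assume t: "t \<in> set ts"
    have "rt t \<in> set (map fsym \<alpha>)" using t \<alpha>(2) by (metis image_eqI list.set_map)
    then have "\<forall>n. rt t = Inl n \<longrightarrow> even n" by (auto simp: fsym_def split: sum.splits)
    then show "\<exists>t0. valid P t0 \<and> fsym (rt t0) = rt t \<and> yield t0 = yield t"
      using Nd.IH[OF t] Nd.prems(1) t by simp
  qed
  from list_choice[OF this] obtain ts0 where
    ts0: "list_all2 (\<lambda>t t0. valid P t0 \<and> fsym (rt t0) = rt t \<and> yield t0 = yield t) ts ts0" by blast
  have "map rt ts = map (\<lambda>t0. fsym (rt t0)) ts0"
    using ts0 by (intro list_all2_map_eq) (auto elim: list_all2_mono)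
  then have "map fsym (map rt ts0) = map fsym \<alpha>" using \<alpha>(2) by simp
  then have r: "map rt ts0 = \<alpha>" by (rule map_fsym_inj)
  have y: "map yield ts = map yield ts0"
    using ts0 by (intro list_all2_map_eq) (auto elim: list_all2_mono)
  have v: "\<forall>t0\<in>set ts0. valid P t0"
    using ts0 by (metis (no_types, lifting) in_set_conv_nth list_all2_conv_all_nth)
  show ?case
    by (intro exI[of _ "Nd A ts0"]) (simp add: r \<alpha>(1) v nA y)
qed


lemma Pm_I2: "(A, \<alpha>) \<in> P \<Longrightarrow> i < length \<alpha> \<Longrightarrow> \<alpha> ! i = Inl B \<Longrightarrow> \<forall>j<i. prodv P (\<alpha> ! j) \<Longrightarrow>
  (2 * A + 1, Inl (2 * B + 1) # map fsym (drop (Suc i) \<alpha>)) \<in> Pm P a"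
  unfolding Pm_def by (rule UnI1, rule UnI2, rule CollectI) blast

lemma Pm_I3: "(A, \<alpha>) \<in> P \<Longrightarrow> i < length \<alpha> \<Longrightarrow> \<alpha> ! i = Inr a \<Longrightarrow> \<forall>j<i. prodv P (\<alpha> ! j) \<Longrightarrow>
  (2 * A + 1, map fsym (drop (Suc i) \<alpha>)) \<in> Pm P a"
  unfolding Pm_def by (rule UnI2, rule CollectI) blast

lemma Pm_E:
  assumes "(2 * A + 1, \<beta>) \<in> Pm P a"
  obtains (2) \<alpha> i B where "(A, \<alpha>) \<in> P" "i < length \<alpha>" "\<alpha> ! i = Inl B" "\<forall>j<i. prodv P (\<alpha> ! j)"
          "\<beta> = Inl (2 * B + 1) # map fsym (drop (Suc i) \<alpha>)"
    | (3) \<alpha> i where "(A, \<alpha>) \<in> P" "i < length \<alpha>" "\<alpha> ! i = Inr a" "\<forall>j<i. prodv P (\<alpha> ! j)"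
          "\<beta> = map fsym (drop (Suc i) \<alpha>)"
proof -
  from assms consider
      (1) A' \<alpha> where "(2 * A + 1, \<beta>) = (2 * A', map fsym \<alpha>)"
    | (2) A' \<alpha> i B where "(2 * A + 1, \<beta>) = (2 * A' + 1, Inl (2 * B + 1) # map fsym (drop (Suc i) \<alpha>))"
        "(A', \<alpha>) \<in> P" "i < length \<alpha>" "\<alpha> ! i = Inl B" "\<forall>j<i. prodv P (\<alpha> ! j)"
    | (3) A' \<alpha> i where "(2 * A + 1, \<beta>) = (2 * A' + 1, map fsym (drop (Suc i) \<alpha>))"
        "(A', \<alpha>) \<in> P" "i < length \<alpha>" "\<alpha> ! i = Inr a" "\<forall>j<i. prodv P (\<alpha> ! j)"
    unfolding Pm_def by (elim UnE CollectE exE conjE) blast+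
  then show ?thesis
  proof cases
    case 1 then show ?thesis by simp
  next
    case 2 then show ?thesis using that(1) by simp
  next
    case 3 then show ?thesis using that(2) by simp
  qed
qed

lemma pre_trees:
  assumes "\<forall>j<i. prodv P (\<alpha> ! j)" "i \<le> length \<alpha>"
  shows "\<exists>pre. map rt pre = take i \<alpha> \<and> (\<forall>t\<in>set pre. valid P t)"
proof -
  have "\<forall>x\<in>set (take i \<alpha>). \<exists>t. valid P t \<and> rt t = x"
  proof
    fix x assume "x \<in> set (take i \<alpha>)"
    then obtain j where "j < length (take i \<alpha>)" "take i \<alpha> ! j = x" by (auto simp: in_set_conv_nth)
    then have "j < i" "\<alpha> ! j = x" by auto
    then have "prodv P x" using assms(1) by blast
    then show "\<exists>t. valid P t \<and> rt t = x" unfolding prodv_def .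
  qed
  from list_choice[OF this] obtain pre where
    pre: "list_all2 (\<lambda>x t. valid P t \<and> rt t = x) (take i \<alpha>) pre" by blast
  have "map (\<lambda>x. x) (take i \<alpha>) = map rt pre"
    using pre by (intro list_all2_map_eq) (auto elim: list_all2_mono)
  moreover have "\<forall>t\<in>set pre. valid P t"
    using pre by (metis (no_types, lifting) in_set_conv_nth list_all2_conv_all_nth)
  ultimately show ?thesis by auto
qed

lemma unrelabel_forest:
  assumes "\<forall>t\<in>set ts. valid (Pm P a) t" "map rt ts = map fsym \<beta>"
  shows "\<exists>ts0. map rt ts0 = \<beta> \<and> (\<forall>t\<in>set ts0. valid P t) \<and> map yield ts0 = map yield ts"
proof -
  have "\<forall>t\<in>set ts. \<exists>t0. valid P t0 \<and> fsym (rt t0) = rt t \<and> yield t0 = yield t"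
  proof
    fix t assume t: "t \<in> set ts"
    have "rt t \<in> set (map fsym \<beta>)" using t assms(2) by (metis image_eqI list.set_map)
    then have "\<forall>n. rt t = Inl n \<longrightarrow> even n" by (auto simp: fsym_def split: sum.splits)
    then show "\<exists>t0. valid P t0 \<and> fsym (rt t0) = rt t \<and> yield t0 = yield t"
      using unrelabel[of P a t] assms(1) t by simp
  qed
  from list_choice[OF this] obtain ts0 where
    ts0: "list_all2 (\<lambda>t t0. valid P t0 \<and> fsym (rt t0) = rt t \<and> yield t0 = yield t) ts ts0" by blast
  have "map rt ts = map (\<lambda>t0. fsym (rt t0)) ts0"
    using ts0 by (intro list_all2_map_eq) (auto elim: list_all2_mono)
  then have "map fsym (map rt ts0) = map fsym \<beta>" using assms(2) by simp
  then have r: "map rt ts0 = \<beta>" by (rule map_fsym_inj)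
  have y: "map yield ts = map yield ts0"
    using ts0 by (intro list_all2_map_eq) (auto elim: list_all2_mono)
  have v: "\<forall>t0\<in>set ts0. valid P t0"
    using ts0 by (metis (no_types, lifting) in_set_conv_nth list_all2_conv_all_nth)
  show ?thesis using r y v by auto
qed

lemma mark:
  "valid P t \<Longrightarrow> yield t = u @ a # v \<Longrightarrow>
   (t = Lf a \<and> v = []) \<or>
   (\<exists>A t'. rt t = Inl A \<and> valid (Pm P a) t' \<and> rt t' = Inl (2 * A + 1) \<and> yield t' = v)"
proof (induction t arbitrary: u v)
  case (Lf x)
  then have "[x] = u @ a # v" by simp
  then have "u = [] \<and> x = a \<and> v = []" by (cases u) auto
  then show ?case by simp
next
  case (Nd A ts)
  have "concat (map yield ts) = u @ a # v" using Nd.prems(2) by simp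
  from concat_split[OF this] obtain i u2 v2 where
    i: "i < length ts" "yield (ts ! i) = u2 @ a # v2"
       "v = v2 @ concat (map yield (drop (Suc i) ts))"
    by (auto simp: drop_map)
  define \<alpha> where "\<alpha> = map rt ts"
  have P\<alpha>: "(A, \<alpha>) \<in> P" using Nd.prems(1) \<alpha>_def by simp
  have vts: "\<forall>t\<in>set ts. valid P t" using Nd.prems(1) by simp
  have pre: "\<forall>j<i. prodv P (\<alpha> ! j)"
  proof (intro allI impI)
    fix j assume "j < i"
    then have "ts ! j \<in> set ts" "\<alpha> ! j = rt (ts ! j)" using i(1) \<alpha>_def by auto
    then show "prodv P (\<alpha> ! j)" using vts unfolding prodv_def by (intro exI[of _ "ts ! j"]) simp
  qed
  have ti: "ts ! i \<in> set ts" using i(1) by simp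
  have len: "i < length \<alpha>" using i(1) \<alpha>_def by simp
  have dr: "map rt (map relabel (drop (Suc i) ts)) = map fsym (drop (Suc i) \<alpha>)"
    by (simp add: \<alpha>_def relabel_rt drop_map comp_def)
  have vdr: "\<forall>t\<in>set (map relabel (drop (Suc i) ts)). valid (Pm P a) t"
  proof
    fix t assume "t \<in> set (map relabel (drop (Suc i) ts))"
    then obtain x where "x \<in> set (drop (Suc i) ts)" "t = relabel x" by auto
    then have "x \<in> set ts" by (meson in_set_dropD)
    then have "valid P x" using vts by simp
    then show "valid (Pm P a) t" using relabel_valid[of P x a] \<open>t = relabel x\<close> by simp
  qed
  have ydr: "concat (map yield (map relabel (drop (Suc i) ts))) = concat (map yield (drop (Suc i) ts))"
    by (simp add: relabel_yield comp_def)
  have vti: "valid P (ts ! i)" using vts ti by simp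
  from Nd.IH[OF ti vti i(2)] show ?case
  proof
    assume h: "ts ! i = Lf a \<and> v2 = []"
    then have ai: "\<alpha> ! i = Inr a" using \<alpha>_def i(1) by simp
    have "(2 * A + 1, map fsym (drop (Suc i) \<alpha>)) \<in> Pm P a"
      by (rule Pm_I3[OF P\<alpha> len ai pre])
    then have "valid (Pm P a) (Nd (2 * A + 1) (map relabel (drop (Suc i) ts)))"
      using dr vdr by simp
    moreover have "yield (Nd (2 * A + 1) (map relabel (drop (Suc i) ts))) = v"
      using ydr i(3) h by simp
    ultimately show ?case
      by (intro disjI2 exI[of _ A] exI[of _ "Nd (2 * A + 1) (map relabel (drop (Suc i) ts))"]) simp
  next
    assume "\<exists>B t'. rt (ts ! i) = Inl B \<and> valid (Pm P a) t' \<and> rt t' = Inl (2 * B + 1) \<and> yield t' = v2"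
    then obtain B t' where h: "rt (ts ! i) = Inl B" "valid (Pm P a) t'" "rt t' = Inl (2 * B + 1)" "yield t' = v2"
      by (elim exE conjE)
    then have ai: "\<alpha> ! i = Inl B" using \<alpha>_def i(1) by simp
    have "(2 * A + 1, Inl (2 * B + 1) # map fsym (drop (Suc i) \<alpha>)) \<in> Pm P a"
      by (rule Pm_I2[OF P\<alpha> len ai pre])
    then have "valid (Pm P a) (Nd (2 * A + 1) (t' # map relabel (drop (Suc i) ts)))"
      using dr vdr h by simp
    moreover have "yield (Nd (2 * A + 1) (t' # map relabel (drop (Suc i) ts))) = v"
      using ydr i(3) h by simp
    ultimately show ?case
      by (intro disjI2 exI[of _ A] exI[of _ "Nd (2 * A + 1) (t' # map relabel (drop (Suc i) ts))"]) simp
  qed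
qed

lemma unmark:
  "valid (Pm P a) t \<Longrightarrow> rt t = Inl (2 * A + 1) \<Longrightarrow>
   \<exists>t0 u. valid P t0 \<and> rt t0 = Inl A \<and> yield t0 = u @ a # yield t"
proof (induction t arbitrary: A)
  case (Lf x) then show ?case by simp
next
  case (Nd n ts)
  have n: "n = 2 * A + 1" using Nd.prems(2) by simp
  have mem: "(2 * A + 1, map rt ts) \<in> Pm P a" using Nd.prems(1) n by simp
  have vts: "\<forall>t\<in>set ts. valid (Pm P a) t" using Nd.prems(1) by simp
  from mem show ?case
  proof (cases rule: Pm_E)
    case (2 \<alpha> i B)
    obtain pre where pre: "map rt pre = take i \<alpha>" "\<forall>t\<in>set pre. valid P t"
      using pre_trees[OF 2(4)] 2(2) by auto
    obtain t1 ts' where ts: "ts = t1 # ts'" using 2(5) by (cases ts) auto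
    have r1: "rt t1 = Inl (2 * B + 1)" "map rt ts' = map fsym (drop (Suc i) \<alpha>)" using 2(5) ts by auto
    have v1: "valid (Pm P a) t1" "\<forall>t\<in>set ts'. valid (Pm P a) t" using vts ts by auto
    from Nd.IH[of t1 B] ts v1(1) r1(1) obtain t10 u1 where
      t10: "valid P t10" "rt t10 = Inl B" "yield t10 = u1 @ a # yield t1" by auto
    from unrelabel_forest[OF v1(2) r1(2)] obtain ts0 where
      ts0: "map rt ts0 = drop (Suc i) \<alpha>" "\<forall>t\<in>set ts0. valid P t" "map yield ts0 = map yield ts'"
      by blast
    let ?T = "Nd A (pre @ t10 # ts0)"
    have "map rt (pre @ t10 # ts0) = take i \<alpha> @ \<alpha> ! i # drop (Suc i) \<alpha>"
      using pre(1) t10(2) ts0(1) 2(3) by simp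
    also have "\<dots> = \<alpha>" using 2(2) by (rule id_take_nth_drop[symmetric])
    finally have "valid P ?T" using 2(1) pre(2) t10(1) ts0(2) by auto
    moreover have "yield ?T = (concat (map yield pre) @ u1) @ a # yield (Nd n ts)"
      using t10(3) ts0(3) ts by simp
    moreover have "rt ?T = Inl A" by simp
    ultimately show ?thesis by blast
  next
    case (3 \<alpha> i)
    obtain pre where pre: "map rt pre = take i \<alpha>" "\<forall>t\<in>set pre. valid P t"
      using pre_trees[OF 3(4)] 3(2) by auto
    from unrelabel_forest[OF vts 3(5)] obtain ts0 where
      ts0: "map rt ts0 = drop (Suc i) \<alpha>" "\<forall>t\<in>set ts0. valid P t" "map yield ts0 = map yield ts"
      by blast
    let ?T = "Nd A (pre @ Lf a # ts0)"
    have "map rt (pre @ Lf a # ts0) = take i \<alpha> @ \<alpha> ! i # drop (Suc i) \<alpha>"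
      using pre(1) ts0(1) 3(3) by simp
    also have "\<dots> = \<alpha>" using 3(2) by (rule id_take_nth_drop[symmetric])
    finally have "valid P ?T" using 3(1) pre(2) ts0(2) by auto
    moreover have "yield ?T = concat (map yield pre) @ a # yield (Nd n ts)"
      using ts0(3) by simp
    moreover have "rt ?T = Inl A" by simp
    ultimately show ?thesis by blast
  qed
qed

lemma suffix_lang: "{v. \<exists>u. u @ a # v \<in> tlang P S} = tlang (Pm P a) (2 * S + 1)"
proof
  show "{v. \<exists>u. u @ a # v \<in> tlang P S} \<subseteq> tlang (Pm P a) (2 * S + 1)"
  proof
    fix v assume "v \<in> {v. \<exists>u. u @ a # v \<in> tlang P S}"
    then obtain u where "u @ a # v \<in> tlang P S" by blast
    from tlangE[OF this] obtain t where t: "valid P t" "rt t = Inl S" "yield t = u @ a # v"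
      by (elim exE conjE)
    from mark[OF t(1) t(3)] t(2) obtain t' where
      "valid (Pm P a) t'" "rt t' = Inl (2 * S + 1)" "yield t' = v" by auto
    then show "v \<in> tlang (Pm P a) (2 * S + 1)" using tlangI by metis
  qed
next
  show "tlang (Pm P a) (2 * S + 1) \<subseteq> {v. \<exists>u. u @ a # v \<in> tlang P S}"
  proof
    fix v assume "v \<in> tlang (Pm P a) (2 * S + 1)"
    from tlangE[OF this] obtain t where t: "valid (Pm P a) t" "rt t = Inl (2 * S + 1)" "yield t = v"
      by (elim exE conjE)
    from unmark[OF t(1) t(2)] obtain t0 u where
      "valid P t0" "rt t0 = Inl S" "yield t0 = u @ a # yield t" by (elim exE conjE)
    then have "u @ a # v \<in> tlang P S" using tlangI t(3) by metis
    then show "v \<in> {v. \<exists>u. u @ a # v \<in> tlang P S}" by blast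
  qed
qed

lemma suffix_uper:
  assumes "finite P"
  shows "uper (length ` {v. \<exists>u. u @ a # v \<in> tlang P S})"
  unfolding suffix_lang using tlang_uper[OF finite_Pm[OF assms]] by simp


definition rb :: "'a list set \<Rightarrow> bool" where
  "rb L \<longleftrightarrow> regular L \<and> bounded L"

lemma concI: "u \<in> A \<Longrightarrow> v \<in> B \<Longrightarrow> u @ v \<in> conc A B"
  unfolding conc_def by (rule CollectI, rule exI, rule exI, rule conjI[OF HOL.refl]) simp

lemma concE: "x \<in> conc A B \<Longrightarrow> \<exists>u v. x = u @ v \<and> u \<in> A \<and> v \<in> B"
  unfolding conc_def by simp

lemma conc_mono: "A \<subseteq> A' \<Longrightarrow> B \<subseteq> B' \<Longrightarrow> conc A B \<subseteq> conc A' B'"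
proof
  fix x assume "A \<subseteq> A'" "B \<subseteq> B'" "x \<in> conc A B"
  then obtain u v where "x = u @ v" "u \<in> A" "v \<in> B" using concE by blast
  then show "x \<in> conc A' B'" using concI \<open>A \<subseteq> A'\<close> \<open>B \<subseteq> B'\<close> by blast
qed

lemma conc_assoc: "conc (conc A B) C = conc A (conc B C)"
proof
  show "conc (conc A B) C \<subseteq> conc A (conc B C)"
  proof
    fix x assume "x \<in> conc (conc A B) C"
    then obtain y w where "x = y @ w" "y \<in> conc A B" "w \<in> C" using concE by blast
    moreover from this obtain u v where "y = u @ v" "u \<in> A" "v \<in> B" using concE by blast
    ultimately have "x = u @ (v @ w)" "u \<in> A" "v @ w \<in> conc B C" using concI by auto
    then show "x \<in> conc A (conc B C)" using concI[of u A "v @ w" "conc B C"] by simp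
  qed
next
  show "conc A (conc B C) \<subseteq> conc (conc A B) C"
  proof
    fix x assume "x \<in> conc A (conc B C)"
    then obtain u y where "x = u @ y" "u \<in> A" "y \<in> conc B C" using concE by blast
    moreover from this obtain v w where "y = v @ w" "v \<in> B" "w \<in> C" using concE by blast
    ultimately have "x = (u @ v) @ w" "u @ v \<in> conc A B" "w \<in> C" using concI by auto
    then show "x \<in> conc (conc A B) C" using concI[of "u @ v" "conc A B" w C] by simp
  qed
qed

lemma conc_eps: "conc {[]} A = A" "conc A {[]} = A"
  unfolding conc_def by auto

lemma nil_bp: "[] \<in> bounded_prod ws"
proof (induction ws)
  case Nil then show ?case by (simp add: bounded_prod_def)
next
  case (Cons w ws)
  have "[] \<in> word_star w" unfolding word_star_def by (intro CollectI exI[of _ 0]) simp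
  then show ?case using Cons unfolding bounded_prod_def conc_def by force
qed

lemma bp_append: "bounded_prod (ws1 @ ws2) = conc (bounded_prod ws1) (bounded_prod ws2)"
proof (induction ws1)
  case Nil then show ?case by (simp add: bounded_prod_def conc_eps)
next
  case (Cons w ws1)
  have "bounded_prod ((w # ws1) @ ws2) = conc (word_star w) (bounded_prod (ws1 @ ws2))"
    by (simp add: bounded_prod_def)
  also have "\<dots> = conc (conc (word_star w) (bounded_prod ws1)) (bounded_prod ws2)"
    using Cons by (simp add: conc_assoc)
  also have "conc (word_star w) (bounded_prod ws1) = bounded_prod (w # ws1)"
    by (simp add: bounded_prod_def)
  finally show ?case .
qed

lemma bounded_empty: "bounded {}"
  unfolding bounded_def by blast

lemma bounded_union: "bounded A \<Longrightarrow> bounded B \<Longrightarrow> bounded (A \<union> B)"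
proof -
  assume "bounded A" "bounded B"
  then obtain ws1 ws2 where w: "A \<subseteq> bounded_prod ws1" "B \<subseteq> bounded_prod ws2"
    unfolding bounded_def by blast
  have "bounded_prod ws1 \<subseteq> bounded_prod (ws1 @ ws2)"
    unfolding bp_append conc_def using nil_bp[of ws2] by force
  moreover have "bounded_prod ws2 \<subseteq> bounded_prod (ws1 @ ws2)"
    unfolding bp_append conc_def using nil_bp[of ws1] by force
  ultimately show ?thesis using w unfolding bounded_def by blast
qed

lemma bounded_conc: "bounded A \<Longrightarrow> bounded B \<Longrightarrow> bounded (conc A B)"
proof -
  assume "bounded A" "bounded B"
  then obtain ws1 ws2 where w: "A \<subseteq> bounded_prod ws1" "B \<subseteq> bounded_prod ws2"
    unfolding bounded_def by blast
  then have "conc A B \<subseteq> bounded_prod (ws1 @ ws2)" unfolding bp_append by (rule conc_mono)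
  then show ?thesis unfolding bounded_def by blast
qed

lemma bounded_word_star: "bounded (word_star u)"
proof -
  have "word_star u \<subseteq> bounded_prod [u]"
    unfolding bounded_prod_def by (simp add: conc_eps)
  then show ?thesis unfolding bounded_def by blast
qed

lemma bounded_single: "bounded {u}"
proof -
  have "u \<in> word_star u" unfolding word_star_def by (intro CollectI exI[of _ 1]) simp
  then have "{u} \<subseteq> word_star u" by simp
  then show ?thesis using bounded_word_star unfolding bounded_def by blast
qed

fun wordrx :: "'a list \<Rightarrow> 'a rexp" where
  "wordrx [] = One" | "wordrx (a # u) = Times (Atom a) (wordrx u)"

lemma rlang_wordrx: "rlang (wordrx u) = {u}"
  by (induction u) (auto simp: conc_def)

lemma kleene_word: "kleene_star {u} = word_star u"
proof
  show "kleene_star {u} \<subseteq> word_star u"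
  proof
    fix x assume "x \<in> kleene_star {u}"
    then show "x \<in> word_star u"
    proof induction
      case nil then show ?case unfolding word_star_def by (intro CollectI exI[of _ 0]) simp
    next
      case (app u' v)
      then obtain n where "v = concat (replicate n u)" unfolding word_star_def by blast
      then show ?case using app(1) unfolding word_star_def by (intro CollectI exI[of _ "Suc n"]) simp
    qed
  qed
next
  show "word_star u \<subseteq> kleene_star {u}"
  proof
    fix x assume "x \<in> word_star u"
    then obtain n where x: "x = concat (replicate n u)" unfolding word_star_def by blast
    have "concat (replicate n u) \<in> kleene_star {u}"
      by (induction n) (auto intro: kleene_star.intros)
    then show "x \<in> kleene_star {u}" using x by simp
  qed
qed

lemma rb_empty: "rb {}"
proof -
  have "{} = rlang (Zero :: 'a rexp)" by simp
  then show ?thesis unfolding rb_def regular_def using bounded_empty by blast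
qed

lemma rb_union: "rb A \<Longrightarrow> rb B \<Longrightarrow> rb (A \<union> B)"
proof -
  assume "rb A" "rb B"
  then obtain r s where "A = rlang r" "B = rlang s" "bounded A" "bounded B" unfolding rb_def regular_def by blast
  then have "A \<union> B = rlang (Plus r s)" "bounded (A \<union> B)" using bounded_union by auto
  then show ?thesis unfolding rb_def regular_def by blast
qed

lemma rb_conc: "rb A \<Longrightarrow> rb B \<Longrightarrow> rb (conc A B)"
proof -
  assume "rb A" "rb B"
  then obtain r s where "A = rlang r" "B = rlang s" "bounded A" "bounded B" unfolding rb_def regular_def by blast
  then have "conc A B = rlang (Times r s)" "bounded (conc A B)" using bounded_conc by auto
  then show ?thesis unfolding rb_def regular_def by blast
qed

lemma rb_single: "rb {u}"
proof -
  have "{u} = rlang (wordrx u)" by (simp add: rlang_wordrx)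
  then show ?thesis unfolding rb_def regular_def using bounded_single by blast
qed

lemma rb_word_star: "rb (word_star u)"
proof -
  have "rlang (Star (wordrx u)) = word_star u" by (simp add: rlang_wordrx kleene_word)
  then show ?thesis unfolding rb_def regular_def using bounded_word_star by blast
qed

lemma rb_Union: "finite F \<Longrightarrow> \<forall>A\<in>F. rb A \<Longrightarrow> rb (\<Union>F)"
proof (induction F rule: finite_induct)
  case empty then show ?case by (simp add: rb_empty)
next
  case (insert A F) then show ?case by (simp add: rb_union)
qed

definition wrd :: "'a list list \<Rightarrow> nat list \<Rightarrow> 'a list" where
  "wrd ws ns = concat (map (\<lambda>(w, n). concat (replicate n w)) (zip ws ns))"

lemma wrd_Cons: "wrd (w # ws) (n # ns) = concat (replicate n w) @ wrd ws ns"
  by (simp add: wrd_def)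

lemma wrd_Nil: "wrd [] ns = []"
  by (simp add: wrd_def)

lemma bp_wrd: "bounded_prod ws = {wrd ws ns |ns. length ns = length ws}"
proof (induction ws)
  case Nil then show ?case by (simp add: bounded_prod_def wrd_Nil)
next
  case (Cons w ws)
  have "bounded_prod (w # ws) = conc (word_star w) (bounded_prod ws)"
    by (simp add: bounded_prod_def)
  also have "\<dots> = {wrd (w # ws) ns |ns. length ns = length (w # ws)}"
  proof
    show "conc (word_star w) (bounded_prod ws) \<subseteq> {wrd (w # ws) ns |ns. length ns = length (w # ws)}"
    proof
      fix x assume "x \<in> conc (word_star w) (bounded_prod ws)"
      then obtain u v where "x = u @ v" "u \<in> word_star w" "v \<in> bounded_prod ws"
        unfolding conc_def by blast
      moreover from this obtain n where "u = concat (replicate n w)" unfolding word_star_def by blast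
      moreover from calculation obtain ns where "v = wrd ws ns" "length ns = length ws"
        using Cons by blast
      ultimately have "x = wrd (w # ws) (n # ns)" "length (n # ns) = length (w # ws)"
        by (simp_all add: wrd_Cons)
      then show "x \<in> {wrd (w # ws) ns |ns. length ns = length (w # ws)}" by blast
    qed
  next
    show "{wrd (w # ws) ns |ns. length ns = length (w # ws)} \<subseteq> conc (word_star w) (bounded_prod ws)"
    proof
      fix x assume "x \<in> {wrd (w # ws) ns |ns. length ns = length (w # ws)}"
      then obtain ns where ns: "x = wrd (w # ws) ns" "length ns = Suc (length ws)" by auto
      then obtain n ns' where "ns = n # ns'" by (cases ns) auto
      with ns have "x = concat (replicate n w) @ wrd ws ns'" "length ns' = length ws"
        by (simp_all add: wrd_Cons)
      moreover have "concat (replicate n w) \<in> word_star w" unfolding word_star_def by blast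
      moreover have "wrd ws ns' \<in> bounded_prod ws" using Cons calculation(2) by blast
      ultimately show "x \<in> conc (word_star w) (bounded_prod ws)" unfolding conc_def by blast
    qed
  qed
  finally show ?case .
qed

lemma bp_filter: "bounded_prod (filter (\<lambda>w. w \<noteq> []) ws) = bounded_prod ws"
proof (induction ws)
  case Nil then show ?case by simp
next
  case (Cons w ws)
  have ws: "word_star [] = {[]}" unfolding word_star_def by simp
  show ?case
  proof (cases "w = []")
    case True then show ?thesis using Cons by (simp add: bounded_prod_def ws conc_eps)
  next
    case False then show ?thesis using Cons by (simp add: bounded_prod_def)
  qed
qed

lemma length_rep: "length (concat (replicate n w)) = n * length w"
  by (induction n) auto

lemma length_wrd_Cons: "length (wrd (w # ws) (n # ns)) = n * length w + length (wrd ws ns)"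
  by (simp add: wrd_Cons length_rep)

lemma set_wrd: "set (wrd ws ns) \<subseteq> set (concat ws)"
proof (induction ws arbitrary: ns)
  case Nil then show ?case by (simp add: wrd_Nil)
next
  case (Cons w ws)
  show ?case
  proof (cases ns)
    case Nil then show ?thesis by (simp add: wrd_def)
  next
    case (Cons n ns')
    have "set (concat (replicate n w)) \<subseteq> set w" by (cases n) auto
    then show ?thesis using Cons.IH[of ns'] Cons by (auto simp: wrd_Cons)
  qed
qed

lemma Psi_mem: "(a, j) \<in> Psi w \<longleftrightarrow> (\<exists>i<length w. w ! i = a \<and> j = length w - i)"
  unfolding Psi_def by auto

lemma Psi_set: "(a, j) \<in> Psi w \<Longrightarrow> a \<in> set w"
  unfolding Psi_mem by auto

lemma Psi_appI1: "(a, j) \<in> Psi u \<Longrightarrow> (a, j + length v) \<in> Psi (u @ v)"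
proof -
  assume "(a, j) \<in> Psi u"
  then obtain i where i: "i < length u" "u ! i = a" "j = length u - i" unfolding Psi_mem by blast
  then have "i < length (u @ v)" "(u @ v) ! i = a" "j + length v = length (u @ v) - i"
    by (auto simp: nth_append)
  then show ?thesis unfolding Psi_mem by blast
qed

lemma Psi_appI2: "(a, j) \<in> Psi v \<Longrightarrow> (a, j) \<in> Psi (u @ v)"
proof -
  assume "(a, j) \<in> Psi v"
  then obtain i where i: "i < length v" "v ! i = a" "j = length v - i" unfolding Psi_mem by blast
  then have "length u + i < length (u @ v)" "(u @ v) ! (length u + i) = a"
    "j = length (u @ v) - (length u + i)" by (auto simp: nth_append)
  then show ?thesis unfolding Psi_mem by blast
qed

lemma Psi_appE: "(a, j) \<in> Psi (u @ v) \<Longrightarrow> (\<exists>j0. (a, j0) \<in> Psi u \<and> j = j0 + length v) \<or> (a, j) \<in> Psi v"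
proof -
  assume "(a, j) \<in> Psi (u @ v)"
  then obtain i where i: "i < length (u @ v)" "(u @ v) ! i = a" "j = length (u @ v) - i"
    unfolding Psi_mem by blast
  show ?thesis
  proof (cases "i < length u")
    case True
    then have "u ! i = a" "j = (length u - i) + length v" using i by (auto simp: nth_append)
    then show ?thesis using True unfolding Psi_mem by blast
  next
    case False
    then have "i - length u < length v" "v ! (i - length u) = a" "j = length v - (i - length u)"
      using i by (auto simp: nth_append)
    then show ?thesis unfolding Psi_mem by blast
  qed
qed

lemma Psi_repE: "(a, j) \<in> Psi (concat (replicate n w)) \<Longrightarrow>
  \<exists>j0 c. (a, j0) \<in> Psi w \<and> c < n \<and> j = j0 + c * length w"
proof (induction n arbitrary: j)
  case 0 then show ?case by (simp add: Psi_def)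
next
  case (Suc n)
  then have "(a, j) \<in> Psi (w @ concat (replicate n w))" by simp
  from Psi_appE[OF this] show ?case
  proof
    assume "\<exists>j0. (a, j0) \<in> Psi w \<and> j = j0 + length (concat (replicate n w))"
    then obtain j0 where "(a, j0) \<in> Psi w" "j = j0 + n * length w" by (auto simp: length_rep)
    then show ?thesis by (intro exI[of _ j0] exI[of _ n]) simp
  next
    assume "(a, j) \<in> Psi (concat (replicate n w))"
    from Suc.IH[OF this] obtain j0 c where "(a, j0) \<in> Psi w" "c < n" "j = j0 + c * length w" by blast
    then show ?thesis by (intro exI[of _ j0] exI[of _ c]) simp
  qed
qed

lemma Psi_repI: "(a, j0) \<in> Psi w \<Longrightarrow> c < n \<Longrightarrow> (a, j0 + c * length w) \<in> Psi (concat (replicate n w))"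
proof (induction n)
  case 0 then show ?case by simp
next
  case (Suc n)
  show ?case
  proof (cases "c = n")
    case True
    have "(a, j0 + length (concat (replicate n w))) \<in> Psi (w @ concat (replicate n w))"
      using Psi_appI1[OF Suc.prems(1)] by simp
    then show ?thesis using True by (simp add: length_rep)
  next
    case False
    then have "c < n" using Suc.prems(2) by simp
    then have "(a, j0 + c * length w) \<in> Psi (concat (replicate n w))" using Suc by simp
    then show ?thesis by (simp add: Psi_appI2)
  qed
qed

definition Erel :: "nat \<Rightarrow> nat \<Rightarrow> nat \<Rightarrow> nat \<Rightarrow> bool" where
  "Erel t p x y \<longleftrightarrow> x = y \<or> (t \<le> x \<and> t \<le> y \<and> x mod p = y mod p)"

definition Vrel :: "nat \<Rightarrow> nat \<Rightarrow> nat \<Rightarrow> nat \<Rightarrow> bool" where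
  "Vrel t p x y \<longleftrightarrow> x = y \<or> (t + p \<le> x \<and> t + p \<le> y \<and> x mod p = y mod p)"

lemma E_refl: "Erel t p x x" by (simp add: Erel_def)

lemma E_sym: "Erel t p x y \<Longrightarrow> Erel t p y x" by (auto simp: Erel_def)

lemma E_add: "Erel t p x y \<Longrightarrow> Erel t p u v \<Longrightarrow> Erel t p (x + u) (y + v)"
  unfolding Erel_def by (auto intro: mod_add_cong)

lemma E_mult: "Erel t p x y \<Longrightarrow> 1 \<le> l \<Longrightarrow> Erel t p (x * l) (y * l)"
  unfolding Erel_def
proof (elim disjE conjE)
  assume "t \<le> x" "t \<le> y" "x mod p = y mod p" "1 \<le> l"
  moreover have "x \<le> x * l" "y \<le> y * l" using \<open>1 \<le> l\<close> by simp_all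
  moreover have "x * l mod p = y * l mod p" using \<open>x mod p = y mod p\<close> by (rule mod_mult_cong) simp
  ultimately show "x * l = y * l \<or> t \<le> x * l \<and> t \<le> y * l \<and> x * l mod p = y * l mod p"
    by linarith
qed simp

lemma V_E: "Vrel t p x y \<Longrightarrow> Erel t p x y"
  unfolding Vrel_def Erel_def by auto

lemma V_choose:
  assumes "Vrel t p n m" "c < n" "0 < p"
  shows "\<exists>c'<m. Erel t p c c'"
proof (cases "n = m \<or> c < m")
  case True then show ?thesis using assms(2) by (auto intro: E_refl)
next
  case False
  then have h: "t + p \<le> m" "m \<le> c" using assms(1) unfolding Vrel_def by auto
  define c' where "c' = t + (c - t) mod p"
  have "(c - t) mod p < p" using assms(3) by simp
  then have "c' < m" using h unfolding c'_def by linarith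
  moreover have "c' mod p = c mod p"
  proof -
    have "c' mod p = (t + (c - t)) mod p" unfolding c'_def by (simp add: mod_add_right_eq)
    also have "t + (c - t) = c" using h by simp
    finally show ?thesis .
  qed
  moreover have "t \<le> c" "t \<le> c'" using h unfolding c'_def by auto
  ultimately show ?thesis unfolding Erel_def by auto
qed

lemma L1:
  "\<forall>w\<in>set ws. w \<noteq> [] \<Longrightarrow> list_all2 (Vrel t p) ns ms \<Longrightarrow> length ns = length ws \<Longrightarrow>
   Erel t p (length (wrd ws ns)) (length (wrd ws ms))"
proof (induction ws arbitrary: ns ms)
  case Nil then show ?case by (simp add: wrd_Nil E_refl)
next
  case (Cons w ws)
  obtain n ns' where ns: "ns = n # ns'" using Cons.prems(3) by (cases ns) auto
  obtain m ms' where ms: "ms = m # ms'" "Vrel t p n m" "list_all2 (Vrel t p) ns' ms'"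
    using Cons.prems(2) ns by (cases ms) auto
  have "Erel t p (n * length w) (m * length w)"
    using E_mult[OF V_E[OF ms(2)]] Cons.prems(1) by (simp add: Suc_leI)
  moreover have "Erel t p (length (wrd ws ns')) (length (wrd ws ms'))"
    using Cons ns ms by simp
  ultimately show ?case using ns ms(1) by (simp add: length_wrd_Cons E_add)
qed

lemma L2:
  "\<forall>w\<in>set ws. w \<noteq> [] \<Longrightarrow> list_all2 (Vrel t p) ns ms \<Longrightarrow> length ns = length ws \<Longrightarrow> 0 < p \<Longrightarrow>
   (a, j) \<in> Psi (wrd ws ns) \<Longrightarrow> \<exists>j'. (a, j') \<in> Psi (wrd ws ms) \<and> Erel t p j j'"
proof (induction ws arbitrary: ns ms j)
  case Nil then show ?case by (simp add: wrd_Nil Psi_def)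
next
  case (Cons w ws)
  obtain n ns' where ns: "ns = n # ns'" using Cons.prems(3) by (cases ns) auto
  obtain m ms' where ms: "ms = m # ms'" "Vrel t p n m" "list_all2 (Vrel t p) ns' ms'"
    using Cons.prems(2) ns by (cases ms) auto
  have lens: "length ns' = length ws" using Cons.prems(3) ns by simp
  have wne: "1 \<le> length w" using Cons.prems(1) by (simp add: Suc_leI)
  have EL: "Erel t p (length (wrd ws ns')) (length (wrd ws ms'))"
    using L1[of ws t p ns' ms'] Cons.prems(1) ms(3) lens by simp
  have "(a, j) \<in> Psi (concat (replicate n w) @ wrd ws ns')"
    using Cons.prems(5) ns by (simp add: wrd_Cons)
  from Psi_appE[OF this] show ?case
  proof
    assume "\<exists>j0. (a, j0) \<in> Psi (concat (replicate n w)) \<and> j = j0 + length (wrd ws ns')"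
    then obtain j1 where j1: "(a, j1) \<in> Psi (concat (replicate n w))" "j = j1 + length (wrd ws ns')"
      by blast
    from Psi_repE[OF j1(1)] obtain j0 c where jc: "(a, j0) \<in> Psi w" "c < n" "j1 = j0 + c * length w"
      by blast
    from V_choose[OF ms(2) jc(2) Cons.prems(4)] obtain c' where c': "c' < m" "Erel t p c c'" by blast
    have r1: "(a, j0 + c' * length w) \<in> Psi (concat (replicate m w))" using Psi_repI[OF jc(1) c'(1)] .
    have mem: "(a, j0 + c' * length w + length (wrd ws ms')) \<in> Psi (wrd (w # ws) ms)"
      using Psi_appI1[OF r1, of "wrd ws ms'"] ms(1) by (simp add: wrd_Cons)
    have "Erel t p (j0 + c * length w + length (wrd ws ns')) (j0 + c' * length w + length (wrd ws ms'))"
      by (intro E_add E_refl E_mult[OF c'(2) wne] EL)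
    then show ?thesis using mem j1(2) jc(3) by auto
  next
    assume "(a, j) \<in> Psi (wrd ws ns')"
    from Cons.IH[OF _ ms(3) lens Cons.prems(4) this] Cons.prems(1) obtain j' where
      "(a, j') \<in> Psi (wrd ws ms')" "Erel t p j j'" by auto
    then show ?thesis using ms(1) by (auto simp: wrd_Cons intro: Psi_appI2)
  qed
qed


definition canon :: "nat \<Rightarrow> nat \<Rightarrow> nat \<Rightarrow> nat" where
  "canon t p n = (if n < t + p then n else t + p + (n - (t + p)) mod p)"

lemma canon_lt: "0 < p \<Longrightarrow> canon t p n < t + 2 * p"
  unfolding canon_def using mod_less_divisor[of p "n - (t + p)"] by auto

lemma mod_shift:
  assumes "k \<le> n" "k \<le> (m::nat)"
  shows "((n - k) mod p = (m - k) mod p) = (n mod p = m mod p)"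
proof (cases "n \<le> m")
  case True
  have "((m - k) mod p = (n - k) mod p) = (p dvd (m - k) - (n - k))"
    using True by (intro mod_eq_dvd_iff_nat) simp
  moreover have "(m mod p = n mod p) = (p dvd m - n)"
    using True by (intro mod_eq_dvd_iff_nat) simp
  moreover have "(m - k) - (n - k) = m - n" using assms by simp
  ultimately show ?thesis by metis
next
  case False
  have "((n - k) mod p = (m - k) mod p) = (p dvd (n - k) - (m - k))"
    using False by (intro mod_eq_dvd_iff_nat) simp
  moreover have "(n mod p = m mod p) = (p dvd n - m)"
    using False by (intro mod_eq_dvd_iff_nat) simp
  moreover have "(n - k) - (m - k) = n - m" using assms by simp
  ultimately show ?thesis by metis
qed

lemma V_canon: "Vrel t p n m \<longleftrightarrow> canon t p n = canon t p m"
proof (cases "n < t + p"; cases "m < t + p")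
  assume "n < t + p" "m < t + p" then show ?thesis unfolding Vrel_def canon_def by auto
next
  assume "n < t + p" "\<not> m < t + p" then show ?thesis unfolding Vrel_def canon_def by auto
next
  assume "\<not> n < t + p" "m < t + p" then show ?thesis unfolding Vrel_def canon_def by auto
next
  assume h: "\<not> n < t + p" "\<not> m < t + p"
  then have "canon t p n = canon t p m \<longleftrightarrow> (n - (t + p)) mod p = (m - (t + p)) mod p"
    unfolding canon_def by auto
  also have "\<dots> \<longleftrightarrow> n mod p = m mod p" using h by (intro mod_shift) auto
  finally show ?thesis unfolding Vrel_def using h by auto
qed

lemma list_V_canon:
  "length ns = length ms \<Longrightarrow> list_all2 (Vrel t p) ns ms \<longleftrightarrow> map (canon t p) ns = map (canon t p) ms"
  by (simp add: list_all2_conv_all_nth list_eq_iff_nth_eq V_canon)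

lemma canon_small: "c < t + p \<Longrightarrow> canon t p n = c \<longleftrightarrow> n = c"
  unfolding canon_def by auto

lemma canon_big:
  assumes "t + p \<le> c" "c < t + 2 * p"
  shows "canon t p n = c \<longleftrightarrow> (\<exists>k. n = c + k * p)"
proof
  assume h: "canon t p n = c"
  then have n: "\<not> n < t + p" using assms unfolding canon_def by auto
  then have c: "c = t + p + (n - (t + p)) mod p" using h unfolding canon_def by simp
  have "n - (t + p) = (n - (t + p)) div p * p + (n - (t + p)) mod p" by simp
  then have "n = c + (n - (t + p)) div p * p" using c n by linarith
  then show "\<exists>k. n = c + k * p" by blast
next
  assume "\<exists>k. n = c + k * p"
  then obtain k where k: "n = c + k * p" by blast
  have "(c - (t + p) + k * p) mod p = (c - (t + p)) mod p" by simp
  also have "\<dots> = c - (t + p)" using assms by simp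
  finally have "(n - (t + p)) mod p = c - (t + p)" using k assms by (simp add: add.commute)
  then show "canon t p n = c" unfolding canon_def using k assms by auto
qed

definition Dset :: "nat \<Rightarrow> nat \<Rightarrow> 'a list \<Rightarrow> nat \<Rightarrow> 'a list set" where
  "Dset t p w c = {concat (replicate n w) |n. canon t p n = c}"

lemma rep_add: "concat (replicate (a + b) w) = concat (replicate a w) @ concat (replicate b w)"
  by (simp add: replicate_add)

lemma rep_mult: "concat (replicate (k * p) w) = concat (replicate k (concat (replicate p w)))"
proof (induction k)
  case 0 then show ?case by simp
next
  case (Suc k)
  have "concat (replicate (Suc k * p) w) = concat (replicate p w) @ concat (replicate (k * p) w)"
    using rep_add[of p "k * p" w] by simp
  then show ?case using Suc by simp
qed

lemma rb_Dset: "0 < p \<Longrightarrow> rb (Dset t p w c)"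
proof -
  assume p: "0 < p"
  consider (s) "c < t + p" | (b) "t + p \<le> c" "c < t + 2 * p" | (e) "t + 2 * p \<le> c" by linarith
  then show ?thesis
  proof cases
    case s
    then have "Dset t p w c = {concat (replicate c w)}" unfolding Dset_def using canon_small by auto
    then show ?thesis using rb_single by simp
  next
    case b
    have "Dset t p w c = conc {concat (replicate c w)} (word_star (concat (replicate p w)))"
    proof
      show "Dset t p w c \<subseteq> conc {concat (replicate c w)} (word_star (concat (replicate p w)))"
      proof
        fix x assume "x \<in> Dset t p w c"
        then obtain n where n: "x = concat (replicate n w)" "canon t p n = c" unfolding Dset_def by blast
        then obtain k where "n = c + k * p" using canon_big[OF b] by blast
        then have "x = concat (replicate c w) @ concat (replicate k (concat (replicate p w)))"
          using n(1) by (simp add: rep_add rep_mult)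
        moreover have "concat (replicate k (concat (replicate p w))) \<in> word_star (concat (replicate p w))"
          unfolding word_star_def by blast
        ultimately show "x \<in> conc {concat (replicate c w)} (word_star (concat (replicate p w)))"
          using concI by (metis singletonI)
      qed
    next
      show "conc {concat (replicate c w)} (word_star (concat (replicate p w))) \<subseteq> Dset t p w c"
      proof
        fix x assume "x \<in> conc {concat (replicate c w)} (word_star (concat (replicate p w)))"
        then obtain u v where "x = u @ v" "u = concat (replicate c w)" "v \<in> word_star (concat (replicate p w))"
          using concE by blast
        moreover from this obtain k where "v = concat (replicate k (concat (replicate p w)))"
          unfolding word_star_def by blast
        ultimately have "x = concat (replicate (c + k * p) w)" by (simp add: rep_add rep_mult)
        moreover have "canon t p (c + k * p) = c" using canon_big[OF b] by blast
        ultimately show "x \<in> Dset t p w c" unfolding Dset_def by blast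
      qed
    qed
    then show ?thesis using rb_conc[OF rb_single rb_word_star] by simp
  next
    case e
    have "canon t p n \<noteq> c" for n using canon_lt[OF p, of t n] e by linarith
    then have "Dset t p w c = {}" unfolding Dset_def by blast
    then show ?thesis using rb_empty by simp
  qed
qed

fun Box :: "nat \<Rightarrow> nat \<Rightarrow> 'a list list \<Rightarrow> nat list \<Rightarrow> 'a list set" where
  "Box t p [] [] = {[]}"
| "Box t p (w # ws) (c # cs) = conc (Dset t p w c) (Box t p ws cs)"
| "Box t p _ _ = {}"

lemma rb_Box: "0 < p \<Longrightarrow> rb (Box t p ws cs)"
  by (induction t p ws cs rule: Box.induct) (auto simp: rb_single rb_empty rb_conc rb_Dset)

lemma Box_eq:
  "length cs = length ws \<Longrightarrow>
   Box t p ws cs = {wrd ws ns |ns. length ns = length ws \<and> map (canon t p) ns = cs}"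
proof (induction ws arbitrary: cs)
  case Nil then show ?case by (simp add: wrd_Nil)
next
  case (Cons w ws)
  then obtain c cs' where cs: "cs = c # cs'" "length cs' = length ws" by (cases cs) auto
  show ?case
  proof
    show "Box t p (w # ws) cs \<subseteq> {wrd (w # ws) ns |ns. length ns = length (w # ws) \<and> map (canon t p) ns = cs}"
    proof
      fix x assume "x \<in> Box t p (w # ws) cs"
      then have "x \<in> conc (Dset t p w c) (Box t p ws cs')" using cs by simp
      then obtain u v where uv: "x = u @ v" "u \<in> Dset t p w c" "v \<in> Box t p ws cs'" using concE by blast
      from uv(2) obtain n where n: "u = concat (replicate n w)" "canon t p n = c" unfolding Dset_def by blast
      from uv(3) Cons.IH[OF cs(2)] obtain ns where ns: "v = wrd ws ns" "length ns = length ws" "map (canon t p) ns = cs'"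
        by blast
      have "x = wrd (w # ws) (n # ns)" using uv(1) n(1) ns(1) by (simp add: wrd_Cons)
      moreover have "length (n # ns) = length (w # ws)" "map (canon t p) (n # ns) = cs"
        using ns n cs by auto
      ultimately show "x \<in> {wrd (w # ws) ns |ns. length ns = length (w # ws) \<and> map (canon t p) ns = cs}"
        by blast
    qed
  next
    show "{wrd (w # ws) ns |ns. length ns = length (w # ws) \<and> map (canon t p) ns = cs} \<subseteq> Box t p (w # ws) cs"
    proof
      fix x assume "x \<in> {wrd (w # ws) ns |ns. length ns = length (w # ws) \<and> map (canon t p) ns = cs}"
      then obtain ns where ns: "x = wrd (w # ws) ns" "length ns = Suc (length ws)" "map (canon t p) ns = cs"
        by auto
      then obtain n ns' where ns': "ns = n # ns'" by (cases ns) auto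
      have u: "concat (replicate n w) \<in> Dset t p w c" using ns(3) ns' cs unfolding Dset_def by auto
      have "wrd ws ns' \<in> {wrd ws ns |ns. length ns = length ws \<and> map (canon t p) ns = cs'}"
        using ns ns' cs by auto
      then have v: "wrd ws ns' \<in> Box t p ws cs'" using Cons.IH[OF cs(2)] by simp
      have "x = concat (replicate n w) @ wrd ws ns'" using ns(1) ns' by (simp add: wrd_Cons)
      then show "x \<in> Box t p (w # ws) cs" using concI[OF u v] cs by simp
    qed
  qed
qed

lemma upt_E: "uptp t p X \<Longrightarrow> x \<in> X \<Longrightarrow> Erel t p x y \<Longrightarrow> y \<in> X"
  unfolding uptp_def Erel_def by auto

lemma Psi_lang_mono: "A \<subseteq> B \<Longrightarrow> Psi_lang A \<subseteq> Psi_lang B"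
  unfolding Psi_lang_def by blast

lemma main_abstract:
  fixes K :: "'a list set"
  assumes ne: "\<forall>w\<in>set ws. w \<noteq> []" and Kb: "K \<subseteq> bounded_prod ws" and p0: "0 < p"
    and uL: "uptp t p (length ` K)"
    and uJ: "\<forall>a\<in>set (concat ws). uptp t p {j. (a, j) \<in> Psi_lang K}"
  shows "\<exists>R. regular R \<and> bounded R \<and> K \<subseteq> R \<and> length ` K = length ` R \<and> Psi_lang K = Psi_lang R"
proof -
  define R where "R = {wrd ws ns |ns. length ns = length ws \<and>
     (\<exists>ms. length ms = length ws \<and> wrd ws ms \<in> K \<and> map (canon t p) ns = map (canon t p) ms)}"
  define C where "C = {map (canon t p) ms |ms. length ms = length ws \<and> wrd ws ms \<in> K}"
  have RC: "R = \<Union> (Box t p ws ` C)"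
  proof
    show "R \<subseteq> \<Union> (Box t p ws ` C)"
    proof
      fix x assume "x \<in> R"
      then obtain ns ms where h: "x = wrd ws ns" "length ns = length ws" "length ms = length ws"
        "wrd ws ms \<in> K" "map (canon t p) ns = map (canon t p) ms" unfolding R_def by blast
      have "map (canon t p) ms \<in> C" unfolding C_def using h by blast
      moreover have "x \<in> Box t p ws (map (canon t p) ms)" using Box_eq[of "map (canon t p) ms" ws t p] h by auto
      ultimately show "x \<in> \<Union> (Box t p ws ` C)" by blast
    qed
  next
    show "\<Union> (Box t p ws ` C) \<subseteq> R"
    proof
      fix x assume "x \<in> \<Union> (Box t p ws ` C)"
      then obtain ms where ms: "length ms = length ws" "wrd ws ms \<in> K" "x \<in> Box t p ws (map (canon t p) ms)"
        unfolding C_def by blast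
      then obtain ns where "x = wrd ws ns" "length ns = length ws" "map (canon t p) ns = map (canon t p) ms"
        using Box_eq[of "map (canon t p) ms" ws t p] by auto
      then show "x \<in> R" unfolding R_def using ms by blast
    qed
  qed
  have "C \<subseteq> {cs. set cs \<subseteq> {..<t + 2 * p} \<and> length cs = length ws}"
    unfolding C_def using canon_lt[OF p0] by auto
  then have finC: "finite C" by (rule finite_subset) (rule finite_lists_length_eq, simp)
  have rbR: "rb R" unfolding RC using finC rb_Box[OF p0] by (intro rb_Union) auto
  have KR: "K \<subseteq> R"
  proof
    fix x assume "x \<in> K"
    then have "x \<in> bounded_prod ws" using Kb by blast
    then obtain ms where "x = wrd ws ms" "length ms = length ws" unfolding bp_wrd by blast
    then show "x \<in> R" unfolding R_def using \<open>x \<in> K\<close> by blast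
  qed
  have lenR: "length ` R \<subseteq> length ` K"
  proof
    fix l assume "l \<in> length ` R"
    then obtain x where x: "x \<in> R" "l = length x" by blast
    from x(1) obtain ns ms where h: "x = wrd ws ns" "length ns = length ws" "length ms = length ws"
        "wrd ws ms \<in> K" "map (canon t p) ns = map (canon t p) ms" unfolding R_def by blast
    have Vrel: "list_all2 (Vrel t p) ns ms" using h list_V_canon[of ns ms t p] by simp
    have "Erel t p (length (wrd ws ns)) (length (wrd ws ms))" using L1[OF ne Vrel h(2)] .
    then have "Erel t p (length (wrd ws ms)) (length x)" using h(1) by (simp add: E_sym)
    moreover have "length (wrd ws ms) \<in> length ` K" using h(4) by blast
    ultimately show "l \<in> length ` K" using upt_E[OF uL] x(2) by blast
  qed
  have PsiR: "Psi_lang R \<subseteq> Psi_lang K"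
  proof
    fix q assume "q \<in> Psi_lang R"
    then obtain x a j where x: "x \<in> R" "q = (a, j)" "(a, j) \<in> Psi x" unfolding Psi_lang_def
      by (metis UN_E surj_pair)
    from x(1) obtain ns ms where h: "x = wrd ws ns" "length ns = length ws" "length ms = length ws"
        "wrd ws ms \<in> K" "map (canon t p) ns = map (canon t p) ms" unfolding R_def by blast
    have Vrel: "list_all2 (Vrel t p) ns ms" using h list_V_canon[of ns ms t p] by simp
    have "(a, j) \<in> Psi (wrd ws ns)" using x(3) h(1) by simp
    from L2[OF ne Vrel h(2) p0 this] obtain j' where j': "(a, j') \<in> Psi (wrd ws ms)" "Erel t p j j'" by blast
    have "a \<in> set (concat ws)" using Psi_set[OF j'(1)] set_wrd[of ws ms] by blast
    then have u: "uptp t p {j. (a, j) \<in> Psi_lang K}" using uJ by blast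
    have "j' \<in> {j. (a, j) \<in> Psi_lang K}" using j'(1) h(4) unfolding Psi_lang_def by blast
    then have "j \<in> {j. (a, j) \<in> Psi_lang K}" using upt_E[OF u _ E_sym[OF j'(2)]] by blast
    then show "q \<in> Psi_lang K" using x(2) by simp
  qed
  have "regular R" "bounded R" using rbR unfolding rb_def by auto
  moreover have "length ` K = length ` R" using KR lenR by blast
  moreover have "Psi_lang K = Psi_lang R" using Psi_lang_mono[OF KR] PsiR by blast
  ultimately show ?thesis using KR by blast
qed


lemma upt_mono: "uptp t p X \<Longrightarrow> t \<le> t' \<Longrightarrow> p dvd p' \<Longrightarrow> uptp t' p' X"
  unfolding uptp_def
proof (intro allI impI)
  fix x y assume h: "\<forall>x y. x \<in> X \<longrightarrow> t \<le> x \<longrightarrow> t \<le> y \<longrightarrow> x mod p = y mod p \<longrightarrow> y \<in> X"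
    "t \<le> t'" "p dvd p'" "x \<in> X" "t' \<le> x" "t' \<le> y" "x mod p' = y mod p'"
  have "x mod p' mod p = y mod p' mod p" using h(7) by simp
  then have "x mod p = y mod p" using mod_mod_cancel[OF h(3)] by simp
  then show "y \<in> X" using h by auto
qed

lemma uper_Suc: "uper X \<Longrightarrow> uper (Suc ` X)"
proof -
  assume "uper X"
  then obtain t p where tp: "0 < p" "uptp t p X" unfolding uper_def by blast
  have "uptp (Suc t) p (Suc ` X)" unfolding uptp_def
  proof (intro allI impI)
    fix x y assume h: "x \<in> Suc ` X" "Suc t \<le> x" "Suc t \<le> y" "x mod p = y mod p"
    then obtain x0 where x0: "x0 \<in> X" "x = Suc x0" by blast
    obtain y0 where y0: "y = Suc y0" using h(3) by (cases y) auto
    have "(x - 1) mod p = (y - 1) mod p" using h(4) h(2) h(3) by (subst mod_shift) auto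
    then have "x0 mod p = y0 mod p" using x0 y0 by simp
    moreover have "t \<le> x0" "t \<le> y0" using h x0 y0 by auto
    ultimately have "y0 \<in> X" using tp(2) x0(1) unfolding uptp_def by blast
    then show "y \<in> Suc ` X" using y0 by blast
  qed
  then show ?thesis unfolding uper_def using tp(1) by blast
qed

lemma common:
  assumes "finite A" "\<forall>a\<in>A. uper (X a)" "uper Y"
  shows "\<exists>t p. 0 < p \<and> uptp t p Y \<and> (\<forall>a\<in>A. uptp t p (X a))"
  using assms
proof (induction A rule: finite_induct)
  case empty then show ?case unfolding uper_def by blast
next
  case (insert b A)
  then obtain t p where tp: "0 < p" "uptp t p Y" "\<forall>a\<in>A. uptp t p (X a)" by auto
  from insert.prems(1) obtain t2 p2 where t2: "0 < p2" "uptp t2 p2 (X b)" unfolding uper_def by blast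
  have "uptp (max t t2) (p * p2) Y" using upt_mono[OF tp(2)] by simp
  moreover have "\<forall>a\<in>A. uptp (max t t2) (p * p2) (X a)"
  proof
    fix a assume "a \<in> A"
    then have "uptp t p (X a)" using tp(3) by blast
    then show "uptp (max t t2) (p * p2) (X a)" by (rule upt_mono) simp_all
  qed
  moreover have "uptp (max t t2) (p * p2) (X b)" using upt_mono[OF t2(2)] by simp
  moreover have "0 < p * p2" using tp(1) t2(1) by simp
  ultimately show ?case by blast
qed

lemma J_eq: "{j. (a, j) \<in> Psi_lang K} = Suc ` length ` {v. \<exists>u. u @ a # v \<in> K}"
proof
  show "{j. (a, j) \<in> Psi_lang K} \<subseteq> Suc ` length ` {v. \<exists>u. u @ a # v \<in> K}"
  proof
    fix j assume "j \<in> {j. (a, j) \<in> Psi_lang K}"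
    then obtain w where w: "w \<in> K" "(a, j) \<in> Psi w" unfolding Psi_lang_def by blast
    then obtain i where i: "i < length w" "w ! i = a" "j = length w - i" unfolding Psi_mem by blast
    have "w = take i w @ w ! i # drop (Suc i) w" using i(1) by (rule id_take_nth_drop)
    then have "take i w @ a # drop (Suc i) w \<in> K" using w(1) i(2) by simp
    then have "drop (Suc i) w \<in> {v. \<exists>u. u @ a # v \<in> K}" by blast
    moreover have "j = Suc (length (drop (Suc i) w))" using i by simp
    ultimately show "j \<in> Suc ` length ` {v. \<exists>u. u @ a # v \<in> K}" by blast
  qed
next
  show "Suc ` length ` {v. \<exists>u. u @ a # v \<in> K} \<subseteq> {j. (a, j) \<in> Psi_lang K}"
  proof
    fix j assume "j \<in> Suc ` length ` {v. \<exists>u. u @ a # v \<in> K}"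
    then obtain u v where uv: "u @ a # v \<in> K" "j = Suc (length v)" by blast
    have "length u < length (u @ a # v)" "(u @ a # v) ! length u = a"
      "j = length (u @ a # v) - length u" using uv(2) by auto
    then have "(a, j) \<in> Psi (u @ a # v)" unfolding Psi_mem by blast
    then show "j \<in> {j. (a, j) \<in> Psi_lang K}" using uv(1) unfolding Psi_lang_def by blast
  qed
qed

theorem lemma12:
  fixes K :: "'a list set"
  assumes "context_free K" and "bounded K"
  shows "\<exists>R. regular R \<and> bounded R \<and> K \<subseteq> R \<and>
           length ` K = length ` R \<and> Psi_lang K = Psi_lang R"
proof -
  from assms(1) obtain P S where PS: "finite P" "K = cfg_lang P S" unfolding context_free_def by blast
  then have KT: "K = tlang P S" by (simp add: cfg_tlang)
  from assms(2) obtain ws0 where "K \<subseteq> bounded_prod ws0" unfolding bounded_def by blast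
  define ws where "ws = filter (\<lambda>w. w \<noteq> []) ws0"
  have Kb: "K \<subseteq> bounded_prod ws" unfolding ws_def bp_filter by fact
  have ne: "\<forall>w\<in>set ws. w \<noteq> []" unfolding ws_def by simp
  have uL: "uper (length ` K)" unfolding KT using tlang_uper[OF PS(1)] .
  have uJ: "\<forall>a\<in>set (concat ws). uper {j. (a, j) \<in> Psi_lang K}"
  proof
    fix a
    have "uper (length ` {v. \<exists>u. u @ a # v \<in> K})" unfolding KT by (rule suffix_uper[OF PS(1)])
    then show "uper {j. (a, j) \<in> Psi_lang K}" unfolding J_eq by (rule uper_Suc)
  qed
  from common[OF _ uJ uL] obtain t p where tp: "0 < p" "uptp t p (length ` K)"
    "\<forall>a\<in>set (concat ws). uptp t p {j. (a, j) \<in> Psi_lang K}" by auto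
  show ?thesis by (rule main_abstract[OF ne Kb tp(1) tp(2) tp(3)])
qed


end
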